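(* Let $W$ be an $(\ell,\lambda)$-statistic, but suppose the edge indicators $x_e$ are drawn independently with probability $p$ (the $G(n,p)$ model), so the $\chi_e$ are i.i.d. Then \[\operatorname{Wass}\Big(\frac{W_3}{\sigma},\mathcal{N}(0,1)\Big)\lesssim_\lambda\frac{1}{\sqrt n},\] where $\operatorname{Wass}(A,B)=\sup_{\mathrm{Lip}(f)\le1}|\mathbb{E}[f(A)-f(B)]|$ is the Wasserstein distance.
   Context: Fix integers $\ell\ge3$ and $\lambda\in(0,1/2)$. For a graph $H$ without isolated vertices, $\gamma_H(\mathbf{x})=\sum_{E\subseteq\binom{[n]}{2},E\simeq H}\prod_{e\in E}\chi_e$, where $\chi_e=(x_e-p)/\sqrt{p(1-p)}$. An $(\ell,\lambda)$-statistic is $W=\sum_{H\in\mathcal{H}}n^{\ell-v(H)}\Delta_H\gamma_H(\mathbf{x})$ where $\mathcal{H}$ is a set of nonisomorphic graphs with no isolated vertices on at most $\ell$ vertices, $\mathcal{H}'\subseteq\mathcal{H}$ contains a connected graph on $k$ vertices for each $3\le k\le\ell$, $p\in(\lambda,1-\lambda)$, and the $\Delta_H$ are reals with $|\Delta_H|\le1/\lambda$ for $H\in\mathcal{H}$ and $|\Delta_H|\ge\lambda$ for $H\in\mathcal{H}'$. $W_k$ denotes the sum of the terms with $v(H)=k$. $\sigma$ is the standard deviation of $W_3$ in the $G(n,p)$ model. Implicit constants may also depend on $\ell,\mathcal{H},\mathcal{H}'$. *)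

theory Defs
  imports "HOL-Probability.Probability"
begin

text \<open>Graphs are represented by their edge sets: a graph H is a finite set of
  2-element sets of natural numbers; its vertex set is the union of its edges,
  so it has no isolated vertices by construction.\<close>

definition is_graph :: "nat set set \<Rightarrow> bool" where
  "is_graph H \<longleftrightarrow> finite H \<and> (\<forall>e\<in>H. card e = 2)"

definition vtx :: "nat set set \<Rightarrow> nat set" where
  "vtx H = \<Union>H"

definition nv :: "nat set set \<Rightarrow> nat" where
  "nv H = card (vtx H)"

definition graph_iso :: "nat set set \<Rightarrow> nat set set \<Rightarrow> bool" where
  "graph_iso G H \<longleftrightarrow> (\<exists>f. bij_betw f (vtx G) (vtx H) \<and> (\<lambda>e. f ` e) ` G = H)"

definition connected_graph :: "nat set set \<Rightarrow> bool" where
  "connected_graph H \<longleftrightarrow>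
     (\<forall>u\<in>vtx H. \<forall>v\<in>vtx H. (u, v) \<in> {(a, b). {a, b} \<in> H}\<^sup>*)"

definition Kedges :: "nat \<Rightarrow> nat set set" where
  "Kedges n = {e. e \<subseteq> {0..<n} \<and> card e = 2}"

definition chi :: "real \<Rightarrow> (nat set \<Rightarrow> bool) \<Rightarrow> nat set \<Rightarrow> real" where
  "chi p x e = ((if x e then 1 else 0) - p) / sqrt (p * (1 - p))"

definition gammaH :: "nat \<Rightarrow> real \<Rightarrow> nat set set \<Rightarrow> (nat set \<Rightarrow> bool) \<Rightarrow> real" where
  "gammaH n p H x = (\<Sum>E\<in>{E. E \<subseteq> Kedges n \<and> graph_iso E H}. \<Prod>e\<in>E. chi p x e)"

definition Wk :: "nat \<Rightarrow> nat set set set \<Rightarrow> (nat set set \<Rightarrow> real) \<Rightarrow> nat \<Rightarrow> real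
                  \<Rightarrow> nat \<Rightarrow> (nat set \<Rightarrow> bool) \<Rightarrow> real" where
  "Wk l \<H> \<Delta> n p k x =
     (\<Sum>H\<in>{H\<in>\<H>. nv H = k}. real n ^ (l - nv H) * \<Delta> H * gammaH n p H x)"

definition Gnp :: "nat \<Rightarrow> real \<Rightarrow> (nat set \<Rightarrow> bool) pmf" where
  "Gnp n p = Pi_pmf (Kedges n) False (\<lambda>_. bernoulli_pmf p)"

definition std_normal :: "real measure" where
  "std_normal = density lborel std_normal_density"

definition wass_std_normal :: "'a measure \<Rightarrow> ('a \<Rightarrow> real) \<Rightarrow> ereal" where
  "wass_std_normal M X =
     (SUP f \<in> {f :: real \<Rightarrow> real. 1-lipschitz_on UNIV f}.
        ereal \<bar>(\<integral>\<omega>. f (X \<omega>) \<partial>M) - (\<integral>z. f z \<partial>std_normal)\<bar>)"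

end

theory Submission
  imports Defs "HOL-Real_Asymp.Real_Asymp"
begin

definition gphi :: "real \<Rightarrow> real" where "gphi t = exp (- (t\<^sup>2) / 2)"

lemma gphi_pos: "gphi t > 0" by (simp add: gphi_def)

lemma gphi_dens: "gphi t = sqrt (2 * pi) * std_normal_density t"
  by (simp add: gphi_def std_normal_density_def normal_density_def)

lemma gphi_cont[continuous_intros]: "continuous_on A gphi"
  unfolding gphi_def by (auto intro!: continuous_intros)

lemma gphi_meas[measurable]: "gphi \<in> borel_measurable borel"
  unfolding gphi_def by measurable

lemma int_gphi_pow: "integrable lborel (\<lambda>t. t ^ k * gphi t)"
proof -
  have "integrable lborel (\<lambda>t. sqrt (2*pi) * (std_normal_density t * t ^ k))"
    using integrable_std_normal_moment[of k] by (intro integrable_mult_right)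
  then show ?thesis by (simp add: gphi_dens mult_ac)
qed

lemma int_gphi_abs: "integrable lborel (\<lambda>t. \<bar>t\<bar> ^ k * gphi t)"
proof -
  have "integrable lborel (\<lambda>t. sqrt (2*pi) * (std_normal_density t * \<bar>t\<bar> ^ k))"
    using integrable_std_normal_moment_abs[of k] by (intro integrable_mult_right)
  then show ?thesis by (simp add: gphi_dens mult_ac)
qed

lemma int_gphi: "integrable lborel gphi"
  using int_gphi_pow[of 0] by simp

lemma integral_gphi: "(\<integral>t. gphi t \<partial>lborel) = sqrt (2 * pi)"
proof -
  have "has_bochner_integral lborel (\<lambda>x. std_normal_density x) 1"
    using std_normal_moment_even[of 0] by simp
  hence "(\<integral>t. std_normal_density t \<partial>lborel) = 1" by (simp add: has_bochner_integral_integral_eq)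
  then show ?thesis by (simp add: gphi_dens)
qed

lemma integral_abs_gphi: "(\<integral>t. \<bar>t\<bar> * gphi t \<partial>lborel) = 2"
proof -
  have "has_bochner_integral lborel (\<lambda>x. std_normal_density x * \<bar>x\<bar>) (sqrt (2/pi))"
    using std_normal_moment_abs_odd[of 0] by simp
  hence "(\<integral>t. std_normal_density t * \<bar>t\<bar> \<partial>lborel) = sqrt (2/pi)" by (simp add: has_bochner_integral_integral_eq)
  moreover have "(\<lambda>t. \<bar>t\<bar> * gphi t) = (\<lambda>t. sqrt (2*pi) * (std_normal_density t * \<bar>t\<bar>))"
    by (simp add: gphi_dens mult_ac)
  ultimately have "(\<integral>t. \<bar>t\<bar> * gphi t \<partial>lborel) = sqrt (2*pi) * sqrt (2/pi)"
    by simp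
  also have "\<dots> = 2" by (simp add: real_sqrt_mult[symmetric])
  finally show ?thesis .
qed

lemma integrable_gbound:
  fixes F :: "real \<Rightarrow> real"
  assumes "F \<in> borel_measurable borel" and "\<And>t. \<bar>F t\<bar> \<le> C * (\<bar>t\<bar> + 1) * gphi t"
  shows "integrable lborel F"
proof (rule Bochner_Integration.integrable_bound)
  show "integrable lborel (\<lambda>t. C * (\<bar>t\<bar> ^ 1 * gphi t) + C * (t ^ 0 * gphi t))"
    by (intro Bochner_Integration.integrable_add Bochner_Integration.integrable_mult_right int_gphi_pow int_gphi_abs)
  show "F \<in> borel_measurable lborel" using assms(1) by simp
  show "AE x in lborel. norm (F x) \<le> norm (C * (\<bar>x\<bar> ^ 1 * gphi x) + C * (x ^ 0 * gphi x))"
  proof (rule AE_I2)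
    fix x
    have "norm (F x) \<le> C * (\<bar>x\<bar> + 1) * gphi x" using assms(2)[of x] by simp
    also have "\<dots> \<le> norm (C * (\<bar>x\<bar> ^ 1 * gphi x) + C * (x ^ 0 * gphi x))"
      by (simp add: algebra_simps)
    finally show "norm (F x) \<le> norm (C * (\<bar>x\<bar> ^ 1 * gphi x) + C * (x ^ 0 * gphi x))" .
  qed
qed


lemma ftc_tail:
  fixes F f :: "real \<Rightarrow> real"
  assumes der: "\<And>t. (F has_real_derivative f t) (at t)"
    and cont: "continuous_on UNIV f"
    and int: "set_integrable lborel {w..} f"
    and lim: "(F \<longlongrightarrow> L) at_top"
  shows "set_lebesgue_integral lborel {w..} f = L - F w"
proof -
  have eq: "set_lebesgue_integral lborel {w..b} f = F b - F w" if "w \<le> b" for b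
  proof -
    have "interval_lebesgue_integral lborel (ereal w) (ereal b) f = F b - F w"
      apply (rule interval_integral_FTC_finite)
      using cont apply (rule continuous_on_subset, simp)
      using der by (auto simp: has_real_derivative_iff_has_vector_derivative[symmetric]
          intro: has_field_derivative_at_within)
    then show ?thesis using that by (simp add: interval_integral_Icc)
  qed
  have t1: "((\<lambda>b. set_lebesgue_integral lborel {w..b} f) \<longlongrightarrow> set_lebesgue_integral lborel {w..} f) at_top"
    by (rule tendsto_set_lebesgue_integral_at_top) (use int in auto)
  have ev: "eventually (\<lambda>b. F b - F w = set_lebesgue_integral lborel {w..b} f) at_top"
    using eventually_ge_at_top[of w] by eventually_elim (simp add: eq)
  have tl: "((\<lambda>b. F b - F w) \<longlongrightarrow> L - F w) at_top"
    by (intro tendsto_intros lim)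
  have t2: "((\<lambda>b. set_lebesgue_integral lborel {w..b} f) \<longlongrightarrow> L - F w) at_top"
    by (rule Lim_transform_eventually[OF tl ev])
  show ?thesis using tendsto_unique[OF _ t1 t2] by simp
qed


definition Kf :: "real \<Rightarrow> real \<Rightarrow> real" where "Kf w t = exp ((w\<^sup>2 - t\<^sup>2) / 2)"

definition Jt :: "real \<Rightarrow> nat \<Rightarrow> real" where
  "Jt w k = (\<integral>t. indicator {w..} t * ((t - w) ^ k * Kf w t) \<partial>lborel)"

lemma Kf_eq: "Kf w t = exp (w\<^sup>2 / 2) * gphi t"
  by (simp add: Kf_def gphi_def exp_add[symmetric] diff_divide_distrib)

lemma Kf_pos: "Kf w t > 0" by (simp add: Kf_def)

lemma int_shift_pow: "integrable lborel (\<lambda>t. (t - w) ^ k * gphi t)"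
proof -
  have eq: "(\<lambda>t. (t - w) ^ k * gphi t) = (\<lambda>t. \<Sum>i\<le>k. (of_nat (k choose i) * (-w) ^ (k - i)) * (t ^ i * gphi t))"
  proof (rule ext)
    fix t
    have "(t - w) ^ k * gphi t = (\<Sum>i\<le>k. of_nat (k choose i) * t ^ i * (-w) ^ (k - i)) * gphi t"
      using binomial_ring[of t "-w" k] by simp
    also have "\<dots> = (\<Sum>i\<le>k. (of_nat (k choose i) * (-w) ^ (k - i)) * (t ^ i * gphi t))"
      by (simp add: sum_distrib_right sum_distrib_left mult_ac)
    finally show "(t - w) ^ k * gphi t = (\<Sum>i\<le>k. (of_nat (k choose i) * (-w) ^ (k - i)) * (t ^ i * gphi t))" .
  qed
  show ?thesis unfolding eq
    by (intro Bochner_Integration.integrable_sum Bochner_Integration.integrable_mult_right int_gphi_pow)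
qed

lemma int_shift_K: "integrable lborel (\<lambda>t. (t - w) ^ k * Kf w t)"
proof -
  have "integrable lborel (\<lambda>t. exp (w\<^sup>2 / 2) * ((t - w) ^ k * gphi t))"
    by (intro Bochner_Integration.integrable_mult_right int_shift_pow)
  then show ?thesis by (simp add: Kf_eq mult_ac)
qed

lemma int_ind: "integrable lborel (F::real\<Rightarrow>real) \<Longrightarrow> integrable lborel (\<lambda>t. indicator {w..} t * F t)"
  using integrable_mult_indicator[of "{w..}" lborel F] by simp

lemma int_shift_Ki: "integrable lborel (\<lambda>t. indicator {w..} t * ((t - w) ^ k * Kf w t))"
  by (intro int_ind int_shift_K)

lemma Jt_nonneg: "0 \<le> Jt w k"
  unfolding Jt_def
  by (intro integral_nonneg_AE AE_I2) (auto simp: indicator_def intro!: mult_nonneg_nonneg less_imp_le[OF Kf_pos])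

lemma Kf_deriv: "((\<lambda>t. Kf w t) has_real_derivative (- t * Kf w t)) (at t)"
  unfolding Kf_def by (auto intro!: derivative_eq_intros simp: field_simps)

lemma Kf_w: "Kf w w = 1" by (simp add: Kf_def)

lemma Kf_lim: "((\<lambda>t. Kf w t) \<longlongrightarrow> 0) at_top"
  unfolding Kf_def by real_asymp

lemma cont_K[continuous_intros]: "continuous_on A (\<lambda>t. Kf w t)"
  unfolding Kf_def by (auto intro!: continuous_intros)

lemma set_int_ind: "integrable lborel (\<lambda>t. indicator {w..} t * F t) \<Longrightarrow> set_integrable lborel {w..} (F::real\<Rightarrow>real)"
  by (simp add: set_integrable_def)

lemma set_int_eq: "set_lebesgue_integral lborel {w..} (F::real\<Rightarrow>real) = (\<integral>t. indicator {w..} t * F t \<partial>lborel)"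
  by (simp add: set_lebesgue_integral_def)

lemma Jt_lin3: "a * Jt w i + b * Jt w j + c * Jt w k =
   (\<integral>t. indicator {w..} t * ((a * (t - w) ^ i + b * (t - w) ^ j + c * (t - w) ^ k) * Kf w t) \<partial>lborel)"
proof -
  have eq: "(\<lambda>t. indicator {w..} t * ((a * (t - w) ^ i + b * (t - w) ^ j + c * (t - w) ^ k) * Kf w t)) =
     (\<lambda>t. a * (indicator {w..} t * ((t - w) ^ i * Kf w t)) + b * (indicator {w..} t * ((t - w) ^ j * Kf w t))
         + c * (indicator {w..} t * ((t - w) ^ k * Kf w t)))"
    by (rule ext) (simp add: algebra_simps)
  show ?thesis unfolding eq Jt_def
    by (subst Bochner_Integration.integral_add Bochner_Integration.integral_mult_right;
        (intro Bochner_Integration.integrable_add Bochner_Integration.integrable_mult_right int_shift_Ki)?)+ simp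
qed

lemma ftc_K:
  assumes "\<And>t. (F has_real_derivative (P t * Kf w t)) (at t)"
    and "continuous_on UNIV P"
    and "\<And>t. P t = a * (t - w) ^ i + b * (t - w) ^ j + c * (t - w) ^ k"
    and "(F \<longlongrightarrow> 0) at_top"
  shows "a * Jt w i + b * Jt w j + c * Jt w k = - F w"
proof -
  have int: "integrable lborel (\<lambda>t. indicator {w..} t * ((a * (t - w) ^ i + b * (t - w) ^ j + c * (t - w) ^ k) * Kf w t))"
    using Jt_lin3 int_shift_Ki
    by (simp add: algebra_simps)
  have "set_lebesgue_integral lborel {w..} (\<lambda>t. P t * Kf w t) = 0 - F w"
  proof (rule ftc_tail[where F=F and L=0])
    show "(F has_real_derivative P t * Kf w t) (at t)" for t by (rule assms(1))
    show "continuous_on UNIV (\<lambda>t. P t * Kf w t)" using assms(2) by (intro continuous_intros)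
    show "set_integrable lborel {w..} (\<lambda>t. P t * Kf w t)" using int by (intro set_int_ind) (simp add: assms(3))
    show "(F \<longlongrightarrow> 0) at_top" by (rule assms(4))
  qed
  then show ?thesis by (simp add: Jt_lin3 set_int_eq assms(3))
qed

lemma J_id0: "Jt w 1 + w * Jt w 0 = 1"
proof -
  have "1 * Jt w 1 + w * Jt w 0 + 0 * Jt w 0 = - (- Kf w w)"
    by (rule ftc_K[where P="\<lambda>t. t"]) (auto intro!: derivative_eq_intros Kf_deriv continuous_intros
       tendsto_minus_cancel_left[THEN iffD1] simp: Kf_lim)
  then show ?thesis by (simp add: Kf_w)
qed

lemma J_id1: "Jt w 2 + w * Jt w 1 = Jt w 0"
proof -
  have "1 * Jt w 2 + w * Jt w 1 + (-1) * Jt w 0 = - (- (w - w) * Kf w w)"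
    by (rule ftc_K[where P="\<lambda>t. (t - w) * t - 1"])
       (auto intro!: derivative_eq_intros Kf_deriv continuous_intros simp: algebra_simps power2_eq_square,
        unfold Kf_def, real_asymp)
  then show ?thesis by simp
qed

lemma J_id2: "Jt w 3 + w * Jt w 2 = 2 * Jt w 1"
proof -
  have "1 * Jt w 3 + w * Jt w 2 + (-2) * Jt w 1 = - (- ((w - w)^2) * Kf w w)"
    by (rule ftc_K[where P="\<lambda>t. (t - w)^2 * t - 2 * (t - w)"])
       (auto intro!: derivative_eq_intros Kf_deriv continuous_intros simp: algebra_simps power2_eq_square power3_eq_cube,
        unfold Kf_def, real_asymp)
  then show ?thesis by simp
qed


lemma exp_half_le2: "exp (1/2::real) \<le> 2"
proof -
  have "exp (1/2::real) * exp (1/2) = exp 1" by (simp add: exp_add[symmetric])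
  also have "\<dots> < 4" using e_less_272 by simp
  finally have "exp (1/2::real) ^ 2 < 2 ^ 2" by (simp add: power2_eq_square)
  then show ?thesis using power_less_imp_less_base[of "exp (1/2::real)" 2 2] by force
qed

lemma sqrt2pi_le3: "sqrt (2 * pi) \<le> 3"
proof -
  have "2 * pi \<le> 3 ^ 2" using pi_less_4 by simp
  hence "sqrt (2 * pi) \<le> sqrt (3 ^ 2)" by (rule real_sqrt_le_mono)
  then show ?thesis by simp
qed

lemma J0_bound:
  assumes "0 \<le> w" "w \<le> 1"
  shows "Jt w 0 \<le> 6"
proof -
  have "Jt w 0 = (\<integral>t. exp (w\<^sup>2 / 2) * (indicator {w..} t * gphi t) \<partial>lborel)"
    unfolding Jt_def by (intro Bochner_Integration.integral_cong) (auto simp: Kf_eq)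
  also have "\<dots> = exp (w\<^sup>2 / 2) * (\<integral>t. indicator {w..} t * gphi t \<partial>lborel)" by simp
  also have "(\<integral>t. indicator {w..} t * gphi t \<partial>lborel) \<le> (\<integral>t. gphi t \<partial>lborel)"
    by (intro integral_mono int_ind int_gphi) (auto simp: indicator_def less_imp_le[OF gphi_pos])
  hence "exp (w\<^sup>2 / 2) * (\<integral>t. indicator {w..} t * gphi t \<partial>lborel) \<le> exp (1/2) * sqrt (2 * pi)"
  proof -
    assume a: "(\<integral>t. indicator {w..} t * gphi t \<partial>lborel) \<le> (\<integral>t. gphi t \<partial>lborel)"
    have "w\<^sup>2 \<le> 1" using assms by (simp add: power_le_one)
    hence "exp (w\<^sup>2 / 2) \<le> exp (1/2)" by simp
    moreover have "0 \<le> (\<integral>t. indicator {w..} t * gphi t \<partial>lborel)"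
      by (intro integral_nonneg_AE AE_I2) (auto simp: indicator_def less_imp_le[OF gphi_pos])
    ultimately show ?thesis using a integral_gphi
      by (metis exp_ge_zero mult_mono)
  qed
  also have "\<dots> \<le> 2 * 3" using exp_half_le2 sqrt2pi_le3 by (intro mult_mono) auto
  finally show ?thesis by simp
qed

lemma J1_bound: assumes "0 \<le> w" shows "Jt w 1 * (1 + w\<^sup>2) \<le> 1"
proof -
  have "w * Jt w 1 \<le> Jt w 0" using J_id1[of w] Jt_nonneg[of w 2] by linarith
  hence "w * (w * Jt w 1) \<le> w * Jt w 0" using assms by (intro mult_left_mono)
  then show ?thesis using J_id0[of w] by (simp add: algebra_simps power2_eq_square)
qed

lemma J2_bound1: assumes "0 \<le> w" shows "w * Jt w 2 \<le> 2 * Jt w 1"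
  using J_id2[of w] Jt_nonneg[of w 3] by linarith

lemma J2_bound2: assumes "0 \<le> w" shows "Jt w 2 \<le> Jt w 0"
  using J_id1[of w] Jt_nonneg[of w 1] assms by (smt (verit) mult_nonneg_nonneg)

lemma J1_le: assumes "0 \<le> w" shows "Jt w 1 \<le> 1"
  using J1_bound[OF assms] Jt_nonneg[of w 1]
  by (smt (verit, best) mult_le_cancel_left1 zero_le_power2)

lemma integral_abs_le:
  fixes F :: "real \<Rightarrow> real"
  assumes "integrable lborel F" "integrable lborel G" "\<And>t. \<bar>F t\<bar> \<le> G t"
  shows "\<bar>\<integral>t. F t \<partial>lborel\<bar> \<le> (\<integral>t. G t \<partial>lborel)"
proof -
  have "norm (\<integral>t. F t \<partial>lborel) \<le> (\<integral>t. G t \<partial>lborel)"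
    by (rule Bochner_Integration.integral_norm_bound_integral) (use assms in auto)
  then show ?thesis by simp
qed


lemma tail_bound:
  fixes g :: "real \<Rightarrow> real" and w :: real
  assumes gm: "g \<in> borel_measurable borel"
    and lip: "\<And>s t. \<bar>g s - g t\<bar> \<le> \<bar>s - t\<bar>"
    and gb: "\<And>t. \<bar>g t\<bar> \<le> \<bar>t\<bar> + 1"
    and w: "0 \<le> w"
  defines "T \<equiv> \<integral>t. indicator {w..} t * (g t * gphi t) \<partial>lborel"
  defines "f0 \<equiv> - exp (w\<^sup>2 / 2) * T"
  shows "\<bar>w * f0 + g w\<bar> \<le> 2" and "\<bar>f0 + w * (w * f0 + g w)\<bar> \<le> 13"
proof -
  have igK: "integrable lborel (\<lambda>t. g t * Kf w t)"
  proof (rule integrable_gbound[where C="exp (w\<^sup>2 / 2)"])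
    show "(\<lambda>t. g t * Kf w t) \<in> borel_measurable borel" unfolding Kf_def using gm by measurable
    fix t
    have "\<bar>g t * Kf w t\<bar> = \<bar>g t\<bar> * (exp (w\<^sup>2 / 2) * gphi t)"
      by (simp add: Kf_eq abs_mult less_imp_le[OF gphi_pos])
    also have "\<dots> \<le> (\<bar>t\<bar> + 1) * (exp (w\<^sup>2 / 2) * gphi t)"
      by (intro mult_right_mono gb) (simp add: less_imp_le[OF gphi_pos])
    finally show "\<bar>g t * Kf w t\<bar> \<le> exp (w\<^sup>2 / 2) * (\<bar>t\<bar> + 1) * gphi t" by (simp add: mult_ac)
  qed
  have igKi: "integrable lborel (\<lambda>t. indicator {w..} t * (g t * Kf w t))" by (intro int_ind igK)
  have iK0: "integrable lborel (\<lambda>t. indicator {w..} t * ((t - w) ^ 0 * Kf w t))" by (rule int_shift_Ki)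
  have iK1: "integrable lborel (\<lambda>t. indicator {w..} t * ((t - w) ^ 1 * Kf w t))" by (rule int_shift_Ki)
  define R where "R = (\<integral>t. indicator {w..} t * ((g t - g w) * Kf w t) \<partial>lborel)"
  have eqR: "(\<lambda>t. indicator {w..} t * ((g t - g w) * Kf w t)) =
      (\<lambda>t. indicator {w..} t * (g t * Kf w t) - g w * (indicator {w..} t * ((t - w) ^ 0 * Kf w t)))"
    by (rule ext) (simp add: algebra_simps)
  have iR: "integrable lborel (\<lambda>t. indicator {w..} t * ((g t - g w) * Kf w t))"
    unfolding eqR by (intro Bochner_Integration.integrable_diff Bochner_Integration.integrable_mult_right igKi iK0)
  have E: "exp (w\<^sup>2 / 2) * T = (\<integral>t. indicator {w..} t * (g t * Kf w t) \<partial>lborel)"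
  proof -
    have "exp (w\<^sup>2 / 2) * T = (\<integral>t. exp (w\<^sup>2 / 2) * (indicator {w..} t * (g t * gphi t)) \<partial>lborel)"
      unfolding T_def by simp
    also have "\<dots> = (\<integral>t. indicator {w..} t * (g t * Kf w t) \<partial>lborel)"
      by (rule Bochner_Integration.integral_cong) (simp_all add: Kf_eq)
    finally show ?thesis .
  qed
  have E2: "(\<integral>t. indicator {w..} t * (g t * Kf w t) \<partial>lborel) = g w * Jt w 0 + R"
  proof -
    have "R = (\<integral>t. indicator {w..} t * (g t * Kf w t) \<partial>lborel) - g w * Jt w 0"
      unfolding R_def eqR Jt_def
      by (subst Bochner_Integration.integral_diff) (use iK0 in \<open>auto intro!: Bochner_Integration.integrable_mult_right igKi\<close>)
    then show ?thesis by simp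
  qed
  have Rb: "\<bar>R\<bar> \<le> Jt w 1"
    unfolding R_def Jt_def
  proof (rule integral_abs_le[OF iR iK1])
    fix t
    show "\<bar>indicator {w..} t * ((g t - g w) * Kf w t)\<bar> \<le> indicator {w..} t * ((t - w) ^ 1 * Kf w t)"
    proof (cases "w \<le> t")
      case True
      have "\<bar>g t - g w\<bar> \<le> t - w" using lip[of t w] True by simp
      then show ?thesis using True Kf_pos[of w t]
        by (simp add: abs_mult indicator_def mult_right_mono)
    qed (simp add: indicator_def)
  qed
  have f0: "f0 = - (g w * Jt w 0 + R)" unfolding f0_def using E E2 by simp
  have J0: "Jt w 1 = 1 - w * Jt w 0" using J_id0[of w] by simp
  have f1: "w * f0 + g w = g w * Jt w 1 - w * R" unfolding f0 J0 by (simp add: algebra_simps)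
  have G: "f0 + w * (w * f0 + g w) = - g w * Jt w 2 - (1 + w\<^sup>2) * R"
  proof -
    have "f0 + w * (w * f0 + g w) = - (g w * Jt w 0 + R) + w * (g w * Jt w 1 - w * R)"
      unfolding f1 by (simp only: f0)
    also have "\<dots> = - g w * (Jt w 0 - w * Jt w 1) - (1 + w\<^sup>2) * R"
      by (simp add: algebra_simps power2_eq_square)
    also have "Jt w 0 - w * Jt w 1 = Jt w 2" using J_id1[of w] by linarith
    finally show ?thesis .
  qed
  have gw: "\<bar>g w\<bar> \<le> w + 1" using gb[of w] w by simp
  have J1n: "0 \<le> Jt w 1" and J2n: "0 \<le> Jt w 2" and J0n: "0 \<le> Jt w 0" by (rule Jt_nonneg)+
  have J1b: "Jt w 1 * (1 + w\<^sup>2) \<le> 1" by (rule J1_bound[OF w])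
  show "\<bar>w * f0 + g w\<bar> \<le> 2"
  proof -
    have "\<bar>w * f0 + g w\<bar> \<le> \<bar>g w * Jt w 1\<bar> + \<bar>w * R\<bar>"
      unfolding f1 by (rule abs_triangle_ineq4)
    also have "\<dots> = \<bar>g w\<bar> * Jt w 1 + w * \<bar>R\<bar>" using w J1n by (simp add: abs_mult)
    also have "\<dots> \<le> (w + 1) * Jt w 1 + w * Jt w 1"
      by (intro add_mono mult_right_mono mult_left_mono gw Rb w J1n)
    also have "\<dots> = (2 * w + 1) * Jt w 1" by (simp add: algebra_simps)
    also have "\<dots> \<le> 2" 
    proof -
      have "0 \<le> (w - 1)\<^sup>2" by simp
      moreover have "0 \<le> w * w" by simp
      ultimately have "2 * w + 1 \<le> 2 * (1 + w\<^sup>2)" unfolding power2_eq_square by (simp add: algebra_simps, linarith)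
      hence "(2 * w + 1) * Jt w 1 \<le> 2 * (1 + w\<^sup>2) * Jt w 1" by (intro mult_right_mono J1n)
      also have "\<dots> = 2 * (Jt w 1 * (1 + w\<^sup>2))" by (simp add: mult_ac)
      also have "\<dots> \<le> 2" using J1b by simp
      finally show ?thesis .
    qed
    finally show ?thesis .
  qed
  show "\<bar>f0 + w * (w * f0 + g w)\<bar> \<le> 13"
  proof -
    have "\<bar>f0 + w * (w * f0 + g w)\<bar> \<le> \<bar>- g w * Jt w 2\<bar> + \<bar>(1 + w\<^sup>2) * R\<bar>"
      unfolding G by (rule abs_triangle_ineq4)
    also have "\<dots> = \<bar>g w\<bar> * Jt w 2 + (1 + w\<^sup>2) * \<bar>R\<bar>" using J2n by (simp add: abs_mult)
    also have "\<dots> \<le> (w + 1) * Jt w 2 + (1 + w\<^sup>2) * Jt w 1"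
      by (intro add_mono mult_right_mono mult_left_mono gw Rb J2n) simp
    also have "\<dots> \<le> 12 + 1"
    proof (intro add_mono)
      show "(1 + w\<^sup>2) * Jt w 1 \<le> 1" using J1b by (simp add: mult_ac)
      show "(w + 1) * Jt w 2 \<le> 12"
      proof (cases "w \<le> 1")
        case True
        have "(w + 1) * Jt w 2 \<le> 2 * Jt w 2" using True J2n by (intro mult_right_mono) auto
        also have "\<dots> \<le> 2 * Jt w 0" using J2_bound2[OF w] by simp
        finally have "(w + 1) * Jt w 2 \<le> 2 * Jt w 0" .
        also have "\<dots> \<le> 12" using J0_bound[OF w True] by simp
        finally show ?thesis .
      next
        case False
        have "(w + 1) * Jt w 2 \<le> (2 * w) * Jt w 2" using False J2n by (intro mult_right_mono) auto
        hence "(w + 1) * Jt w 2 \<le> 2 * (w * Jt w 2)" by (simp add: mult_ac)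
        also have "\<dots> \<le> 4 * Jt w 1" using J2_bound1[OF w] by simp
        also have "\<dots> \<le> 4" using J1_le[OF w] by simp
        finally show ?thesis by simp
      qed
    qed
    finally show ?thesis by simp
  qed
qed


lemma lipD: "1-lipschitz_on UNIV h \<Longrightarrow> \<bar>h s - h t\<bar> \<le> \<bar>s - t\<bar>"
  for h :: "real \<Rightarrow> real"
  unfolding lipschitz_on_def by (auto simp: dist_real_def)

lemma lip_meas: "1-lipschitz_on UNIV h \<Longrightarrow> h \<in> borel_measurable borel"
  for h :: "real \<Rightarrow> real"
  by (intro borel_measurable_continuous_onI lipschitz_on_continuous_on)

lemma std_normal_integral:
  fixes h :: "real \<Rightarrow> real"
  assumes "h \<in> borel_measurable borel"
  shows "(\<integral>z. h z \<partial>std_normal) = (\<integral>t. h t * gphi t \<partial>lborel) / sqrt (2 * pi)"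
proof -
  have "(\<integral>z. h z \<partial>std_normal) = (\<integral>t. std_normal_density t * h t \<partial>lborel)"
    unfolding std_normal_def
    by (subst integral_real_density) (use assms in auto)
  also have "\<dots> = (\<integral>t. (h t * gphi t) / sqrt (2 * pi) \<partial>lborel)"
    by (rule Bochner_Integration.integral_cong) (simp_all add: gphi_dens)
  also have "\<dots> = (\<integral>t. h t * gphi t \<partial>lborel) / sqrt (2 * pi)" by simp
  finally show ?thesis .
qed

lemma lip_int:
  fixes h :: "real \<Rightarrow> real"
  assumes "1-lipschitz_on UNIV h"
  shows "integrable lborel (\<lambda>t. h t * gphi t)"
proof (rule integrable_gbound[where C="\<bar>h 0\<bar> + 1"])
  show "(\<lambda>t. h t * gphi t) \<in> borel_measurable borel" using lip_meas[OF assms] by measurable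
  fix t
  have "\<bar>h t\<bar> \<le> \<bar>h 0\<bar> + \<bar>t\<bar>" using lipD[OF assms, of t 0] by simp
  also have "\<dots> \<le> (\<bar>h 0\<bar> + 1) * (\<bar>t\<bar> + 1)" by (simp add: algebra_simps)
  finally have "\<bar>h t\<bar> * gphi t \<le> (\<bar>h 0\<bar> + 1) * (\<bar>t\<bar> + 1) * gphi t"
    by (intro mult_right_mono) (auto simp: less_imp_le[OF gphi_pos])
  then show "\<bar>h t * gphi t\<bar> \<le> (\<bar>h 0\<bar> + 1) * (\<bar>t\<bar> + 1) * gphi t"
    by (simp add: abs_mult less_imp_le[OF gphi_pos])
qed

lemma mu_bound:
  fixes h :: "real \<Rightarrow> real"
  assumes "1-lipschitz_on UNIV h"
  shows "\<bar>h 0 - (\<integral>z. h z \<partial>std_normal)\<bar> \<le> 1"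
proof -
  have hm: "h \<in> borel_measurable borel" by (rule lip_meas[OF assms])
  have s: "sqrt (2 * pi) > 0" by simp
  have "(\<integral>t. (h t - h 0) * gphi t \<partial>lborel) = (\<integral>t. h t * gphi t \<partial>lborel) - h 0 * sqrt (2 * pi)"
  proof -
    have "(\<integral>t. (h t - h 0) * gphi t \<partial>lborel) = (\<integral>t. h t * gphi t - h 0 * gphi t \<partial>lborel)"
      by (simp add: algebra_simps)
    also have "\<dots> = (\<integral>t. h t * gphi t \<partial>lborel) - (\<integral>t. h 0 * gphi t \<partial>lborel)"
      by (intro Bochner_Integration.integral_diff lip_int[OF assms] Bochner_Integration.integrable_mult_right int_gphi)
    finally show ?thesis using integral_gphi by simp
  qed
  hence eq: "(\<integral>z. h z \<partial>std_normal) - h 0 = (\<integral>t. (h t - h 0) * gphi t \<partial>lborel) / sqrt (2 * pi)"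
    using std_normal_integral[OF hm] s by (simp add: field_simps)
  have "\<bar>\<integral>t. (h t - h 0) * gphi t \<partial>lborel\<bar> \<le> (\<integral>t. \<bar>t\<bar> * gphi t \<partial>lborel)"
  proof (rule integral_abs_le)
    show "integrable lborel (\<lambda>t. (h t - h 0) * gphi t)"
      using Bochner_Integration.integrable_diff[OF lip_int[OF assms] Bochner_Integration.integrable_mult_right[OF int_gphi, of "h 0"]]
      by (simp add: algebra_simps)
    show "integrable lborel (\<lambda>t. \<bar>t\<bar> * gphi t)" using int_gphi_abs[of 1] by simp
    fix t show "\<bar>(h t - h 0) * gphi t\<bar> \<le> \<bar>t\<bar> * gphi t"
      using lipD[OF assms, of t 0] by (simp add: abs_mult less_imp_le[OF gphi_pos] mult_right_mono)
  qed
  hence "\<bar>\<integral>t. (h t - h 0) * gphi t \<partial>lborel\<bar> \<le> 2" using integral_abs_gphi by simp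
  moreover have "2 \<le> sqrt (2 * pi)"
  proof -
    have "sqrt (2 ^ 2) \<le> sqrt (2 * pi)" using pi_gt3 by (intro real_sqrt_le_mono) simp
    then show ?thesis by simp
  qed
  ultimately have "\<bar>\<integral>t. (h t - h 0) * gphi t \<partial>lborel\<bar> / sqrt (2 * pi) \<le> 1"
    using s by (simp add: divide_le_eq)
  moreover have "\<bar>(\<integral>z. h z \<partial>std_normal) - h 0\<bar> = \<bar>\<integral>t. (h t - h 0) * gphi t \<partial>lborel\<bar> / sqrt (2 * pi)"
    unfolding eq by simp
  ultimately show ?thesis by (simp add: abs_minus_commute)
qed


definition mu :: "(real \<Rightarrow> real) \<Rightarrow> real" where "mu h = (\<integral>z. h z \<partial>std_normal)"
definition hh :: "(real \<Rightarrow> real) \<Rightarrow> real \<Rightarrow> real" where "hh h t = h t - mu h"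
definition Fh :: "(real \<Rightarrow> real) \<Rightarrow> real \<Rightarrow> real" where
  "Fh h w = (\<integral>t. indicator {..<w} t * (hh h t * gphi t) \<partial>lborel)"
definition sf :: "(real \<Rightarrow> real) \<Rightarrow> real \<Rightarrow> real" where "sf h w = exp (w\<^sup>2 / 2) * Fh h w"
definition sf' :: "(real \<Rightarrow> real) \<Rightarrow> real \<Rightarrow> real" where "sf' h w = w * sf h w + hh h w"

context
  fixes h :: "real \<Rightarrow> real"
  assumes lip: "1-lipschitz_on UNIV h"
begin

lemma hh_lip: "\<bar>hh h s - hh h t\<bar> \<le> \<bar>s - t\<bar>"
  unfolding hh_def using lipD[OF lip] by simp

lemma hh_bound: "\<bar>hh h t\<bar> \<le> \<bar>t\<bar> + 1"
proof -
  have "\<bar>hh h t\<bar> \<le> \<bar>h t - h 0\<bar> + \<bar>h 0 - mu h\<bar>" unfolding hh_def by linarith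
  also have "\<dots> \<le> \<bar>t\<bar> + 1" using lipD[OF lip, of t 0] mu_bound[OF lip] unfolding mu_def by simp
  finally show ?thesis .
qed

lemma hh_meas[measurable]: "hh h \<in> borel_measurable borel"
  unfolding hh_def using lip_meas[OF lip] by measurable

lemma hh_cont: "continuous_on A (hh h)"
proof -
  have "continuous_on UNIV h" by (rule lipschitz_on_continuous_on[OF lip])
  then have "continuous_on A h" by (rule continuous_on_subset) simp
  then show ?thesis unfolding hh_def[abs_def] by (intro continuous_intros)
qed

lemma int_hh: "integrable lborel (\<lambda>t. hh h t * gphi t)"
proof -
  have "integrable lborel (\<lambda>t. h t * gphi t - mu h * gphi t)"
    by (intro Bochner_Integration.integrable_diff lip_int[OF lip] Bochner_Integration.integrable_mult_right int_gphi)
  then show ?thesis by (simp add: hh_def algebra_simps)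
qed

lemma hh_total: "(\<integral>t. hh h t * gphi t \<partial>lborel) = 0"
proof -
  have "(\<integral>t. hh h t * gphi t \<partial>lborel) = (\<integral>t. h t * gphi t - mu h * gphi t \<partial>lborel)"
    by (simp add: hh_def algebra_simps)
  also have "\<dots> = (\<integral>t. h t * gphi t \<partial>lborel) - mu h * sqrt (2 * pi)"
    by (subst Bochner_Integration.integral_diff) (auto intro!: lip_int[OF lip] int_gphi simp: integral_gphi)
  also have "(\<integral>t. h t * gphi t \<partial>lborel) = mu h * sqrt (2 * pi)"
    using std_normal_integral[OF lip_meas[OF lip]] unfolding mu_def by simp
  finally show ?thesis by simp
qed

lemma F_split: "Fh h w = - (\<integral>t. indicator {w..} t * (hh h t * gphi t) \<partial>lborel)"
proof -
  have i1: "integrable lborel (\<lambda>t. indicator {..<w} t * (hh h t * gphi t))"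
    using integrable_mult_indicator[of "{..<w}" lborel, OF _ int_hh] by simp
  have i2: "integrable lborel (\<lambda>t. indicator {w..} t * (hh h t * gphi t))"
    using integrable_mult_indicator[of "{w..}" lborel, OF _ int_hh] by simp
  have "Fh h w + (\<integral>t. indicator {w..} t * (hh h t * gphi t) \<partial>lborel)
      = (\<integral>t. indicator {..<w} t * (hh h t * gphi t) + indicator {w..} t * (hh h t * gphi t) \<partial>lborel)"
    unfolding Fh_def by (rule Bochner_Integration.integral_add[symmetric, OF i1 i2])
  also have "\<dots> = (\<integral>t. hh h t * gphi t \<partial>lborel)"
    by (rule Bochner_Integration.integral_cong) (auto simp: indicator_def)
  finally show ?thesis using hh_total by simp
qed

end

context
  fixes h :: "real \<Rightarrow> real"
  assumes lip: "1-lipschitz_on UNIV h"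
begin
lemma F_deriv: "(Fh h has_real_derivative (hh h w * gphi w)) (at w)"
proof -
  let ?c = "w - 1" and ?b = "w + 1"
  let ?psi = "\<lambda>t. hh h t * gphi t"
  have cont: "continuous_on {?c..?b} ?psi" by (intro continuous_intros hh_cont[OF lip])
  have d: "((\<lambda>u. interval_lebesgue_integral lborel (ereal ?c) (ereal u) ?psi) has_vector_derivative ?psi w)
      (at w within {?c..?b})"
    by (rule interval_integral_FTC2[OF _ _ cont]) simp_all
  have eq: "Fh h u = Fh h ?c + interval_lebesgue_integral lborel (ereal ?c) (ereal u) ?psi" if "u \<in> {?c..?b}" for u
  proof -
    have cu: "?c \<le> u" using that by simp
    have i1: "set_integrable lborel {..<?c} ?psi"
      unfolding set_integrable_def using integrable_mult_indicator[of "{..<?c}" lborel, OF _ int_hh[OF lip]] by simp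
    have i2: "set_integrable lborel {?c..<u} ?psi"
      unfolding set_integrable_def using integrable_mult_indicator[of "{?c..<u}" lborel, OF _ int_hh[OF lip]] by simp
    have "Fh h u = set_lebesgue_integral lborel {..<u} ?psi"
      unfolding Fh_def set_lebesgue_integral_def by simp
    also have "{..<u} = {..<?c} \<union> {?c..<u}" using cu by auto
    also have "set_lebesgue_integral lborel ({..<?c} \<union> {?c..<u}) ?psi
        = set_lebesgue_integral lborel {..<?c} ?psi + set_lebesgue_integral lborel {?c..<u} ?psi"
      by (rule set_integral_Un[OF _ i1 i2]) auto
    also have "set_lebesgue_integral lborel {..<?c} ?psi = Fh h ?c"
      unfolding Fh_def set_lebesgue_integral_def by simp
    also have "set_lebesgue_integral lborel {?c..<u} ?psi = interval_lebesgue_integral lborel (ereal ?c) (ereal u) ?psi"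
      using cu by (simp add: interval_integral_Ico)
    finally show ?thesis .
  qed
  have d2: "((\<lambda>u. Fh h ?c + interval_lebesgue_integral lborel (ereal ?c) (ereal u) ?psi) has_vector_derivative ?psi w)
      (at w within {?c..?b})"
    using has_vector_derivative_add[OF has_vector_derivative_const d] by simp
  have d3: "(Fh h has_vector_derivative ?psi w) (at w within {?c..?b})"
    by (rule has_vector_derivative_transform[OF _ _ d2]) (simp, rule eq)
  have "at w within {?c..?b} = at w"
    by (rule at_within_interior) (simp add: interior_atLeastAtMost_real)
  then show ?thesis using d3 by (simp add: has_real_derivative_iff_has_vector_derivative)
qed


lemma sf_deriv: "(sf h has_real_derivative sf' h w) (at w)"
proof -
  have d1: "((\<lambda>w. exp (w\<^sup>2 / 2)) has_real_derivative exp (w\<^sup>2 / 2) * w) (at w)"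
  proof -
    have "((\<lambda>w. w\<^sup>2 / 2) has_real_derivative w) (at w)"
      by (auto intro!: derivative_eq_intros)
    then show ?thesis using DERIV_fun_exp by blast
  qed
  have "((\<lambda>w. exp (w\<^sup>2 / 2) * Fh h w) has_real_derivative
      (exp (w\<^sup>2 / 2) * w) * Fh h w + (hh h w * gphi w) * exp (w\<^sup>2 / 2)) (at w)"
    by (rule DERIV_mult[OF d1 F_deriv])
  moreover have "exp (w\<^sup>2 / 2) * gphi w = 1" by (simp add: gphi_def exp_add[symmetric])
  moreover have "(exp (w\<^sup>2 / 2) * w) * Fh h w + (hh h w * gphi w) * exp (w\<^sup>2 / 2)
      = w * (exp (w\<^sup>2 / 2) * Fh h w) + hh h w * (exp (w\<^sup>2 / 2) * gphi w)"
    by (simp only: mult_ac)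
  ultimately show ?thesis unfolding sf_def[abs_def] sf'_def by simp
qed

lemma sf_bounds_pos:
  assumes w: "0 \<le> w"
  shows "\<bar>sf' h w\<bar> \<le> 2 \<and> \<bar>sf h w + w * sf' h w\<bar> \<le> 13"
proof -
  have eq: "sf h w = - exp (w\<^sup>2 / 2) * (\<integral>t. indicator {w..} t * (hh h t * gphi t) \<partial>lborel)"
    unfolding sf_def by (simp add: F_split[OF lip])
  have tb: "\<bar>w * sf h w + hh h w\<bar> \<le> 2" "\<bar>sf h w + w * (w * sf h w + hh h w)\<bar> \<le> 13"
    using tail_bound[OF hh_meas[OF lip] hh_lip[OF lip] hh_bound[OF lip] w, folded eq] by auto
  then show ?thesis unfolding sf'_def by simp
qed

lemma sf_bounds_neg:
  assumes w: "w < 0"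
  shows "\<bar>sf' h w\<bar> \<le> 2 \<and> \<bar>sf h w + w * sf' h w\<bar> \<le> 13"
proof -
  define v where "v = - w"
  have v: "0 \<le> v" using w by (simp add: v_def)
  define h2 where "h2 s = - hh h (- s)" for s
  have h2m[measurable]: "h2 \<in> borel_measurable borel" unfolding h2_def using hh_meas[OF lip] by measurable
  have h2l: "\<bar>h2 s - h2 t\<bar> \<le> \<bar>s - t\<bar>" for s t
    unfolding h2_def using hh_lip[OF lip, of "-t" "-s"] by (simp add: abs_minus_commute)
  have h2b: "\<bar>h2 t\<bar> \<le> \<bar>t\<bar> + 1" for t unfolding h2_def using hh_bound[OF lip, of "-t"] by simp
  have "Fh h w = (\<integral>s. indicator {..<w} (- s) * (hh h (- s) * gphi (- s)) \<partial>lborel)"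
    unfolding Fh_def using lborel_integral_real_affine[of "-1" "\<lambda>t. indicator {..<w} t * (hh h t * gphi t)" 0] by simp
  also have "\<dots> = (\<integral>s. - (indicator {v<..} s * (h2 s * gphi s)) \<partial>lborel)"
    by (rule Bochner_Integration.integral_cong) (auto simp: v_def h2_def gphi_def indicator_def)
  also have "\<dots> = - (\<integral>s. indicator {v..} s * (h2 s * gphi s) \<partial>lborel)"
  proof -
    have "(\<integral>s. indicator {v<..} s * (h2 s * gphi s) \<partial>lborel) = (\<integral>s. indicator {v..} s * (h2 s * gphi s) \<partial>lborel)"
    proof (rule integral_cong_AE)
      show "AE s in lborel. indicator {v<..} s * (h2 s * gphi s) = indicator {v..} s * (h2 s * gphi s)"
        using AE_lborel_singleton[of v] by eventually_elim (auto simp: indicator_def)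
    next
      show "(\<lambda>s. indicator {v<..} s * (h2 s * gphi s)) \<in> borel_measurable lborel" by measurable
    next
      show "(\<lambda>s. indicator {v..} s * (h2 s * gphi s)) \<in> borel_measurable lborel" by measurable
    qed
    then show ?thesis by simp
  qed
  finally have Fe: "Fh h w = - (\<integral>s. indicator {v..} s * (h2 s * gphi s) \<partial>lborel)" .
  define f0 where "f0 = - exp (v\<^sup>2 / 2) * (\<integral>s. indicator {v..} s * (h2 s * gphi s) \<partial>lborel)"
  have sfe: "sf h w = f0" unfolding sf_def Fe f0_def by (simp add: v_def)
  have hw: "hh h w = - h2 v" unfolding h2_def v_def by simp
  have tb: "\<bar>v * f0 + h2 v\<bar> \<le> 2" "\<bar>f0 + v * (v * f0 + h2 v)\<bar> \<le> 13"
    using tail_bound[OF h2m h2l h2b v, folded f0_def] by blast+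
  have "sf' h w = - (v * f0 + h2 v)" unfolding sf'_def sfe hw by (simp add: v_def)
  moreover have "sf h w + w * sf' h w = f0 + v * (v * f0 + h2 v)"
    unfolding sf'_def sfe hw by (simp add: v_def algebra_simps)
  ultimately show ?thesis using tb by simp
qed

lemma sf_bounds: "\<bar>sf' h w\<bar> \<le> 2 \<and> \<bar>sf h w + w * sf' h w\<bar> \<le> 13"
  using sf_bounds_pos sf_bounds_neg by (cases "0 \<le> w") auto

lemma sf'_lip: "\<bar>sf' h x - sf' h y\<bar> \<le> 14 * \<bar>x - y\<bar>"
proof -
  define q where "q w = w * sf h w" for w
  have qd: "(q has_real_derivative (sf h w + w * sf' h w)) (at w)" for w
  proof -
    have "((\<lambda>w. w * sf h w) has_real_derivative (1 * sf h w + sf' h w * w)) (at w)"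
      by (rule DERIV_mult[OF DERIV_ident sf_deriv])
    then show ?thesis unfolding q_def[abs_def] by (simp add: mult.commute)
  qed
  have ql: "\<bar>q b - q a\<bar> \<le> 13 * \<bar>b - a\<bar>" if ab: "a < b" for a b
  proof -
    obtain z where "a < z" "z < b" "q b - q a = (b - a) * (sf h z + z * sf' h z)"
      using MVT2[of a b q "\<lambda>w. sf h w + w * sf' h w"] ab qd by blast
    then have "\<bar>q b - q a\<bar> = \<bar>b - a\<bar> * \<bar>sf h z + z * sf' h z\<bar>" by (simp add: abs_mult)
    also have "\<dots> \<le> \<bar>b - a\<bar> * 13" using sf_bounds[of z] by (intro mult_left_mono) auto
    finally show ?thesis by simp
  qed
  have qa: "\<bar>q x - q y\<bar> \<le> 13 * \<bar>x - y\<bar>"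
  proof (cases x y rule: linorder_cases)
    case less then show ?thesis using ql[OF less] by (simp add: abs_minus_commute)
  next
    case greater then show ?thesis using ql[OF greater] by simp
  qed simp
  have "sf' h x - sf' h y = (q x - q y) + (hh h x - hh h y)" unfolding sf'_def q_def by simp
  then have "\<bar>sf' h x - sf' h y\<bar> \<le> \<bar>q x - q y\<bar> + \<bar>hh h x - hh h y\<bar>" by linarith
  also have "\<dots> \<le> 13 * \<bar>x - y\<bar> + \<bar>x - y\<bar>" by (rule add_mono[OF qa hh_lip[OF lip]])
  finally show ?thesis by simp
qed

end

lemma stein_solution:
  fixes h :: "real \<Rightarrow> real"
  assumes lip: "1-lipschitz_on UNIV h"
  shows "\<exists>f f'. (\<forall>w. (f has_real_derivative f' w) (at w)) \<and>
     (\<forall>w. f' w - w * f w = h w - (\<integral>z. h z \<partial>std_normal)) \<and>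
     (\<forall>w. \<bar>f' w\<bar> \<le> 2) \<and> (\<forall>x y. \<bar>f' x - f' y\<bar> \<le> 14 * \<bar>x - y\<bar>)"
  apply (rule exI[of _ "sf h"], rule exI[of _ "sf' h"])
  using sf_deriv[OF lip] sf_bounds[OF lip] sf'_lip[OF lip]
  by (auto simp: sf'_def hh_def mu_def)


lemma finite_Kedges: "finite (Kedges n)"
proof -
  have "Kedges n \<subseteq> Pow {0..<n}" unfolding Kedges_def by auto
  then show ?thesis by (rule finite_subset) simp
qed

lemma finite_set_pmf_Pi:
  assumes "finite A" "\<And>x. finite (set_pmf (q x))"
  shows "finite (set_pmf (Pi_pmf A d q))"
  using assms by (simp add: set_Pi_pmf finite_PiE_dflt)

lemma finite_set_Gnp: "finite (set_pmf (Gnp n p))"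
  unfolding Gnp_def
  by (rule finite_set_pmf_Pi[OF finite_Kedges]) (rule finite_subset[of _ UNIV], auto)

lemma int_Gnp[simp, intro]: "integrable (measure_pmf (Gnp n p)) (F :: _ \<Rightarrow> real)"
  by (rule integrable_measure_pmf_finite[OF finite_set_Gnp])

lemma expectation_pair_prod:
  fixes g :: "'a \<Rightarrow> real" and G :: "'b \<Rightarrow> real"
  assumes "finite (set_pmf M)" "finite (set_pmf N)"
  shows "measure_pmf.expectation (pair_pmf M N) (\<lambda>z. g (fst z) * G (snd z)) =
         measure_pmf.expectation M g * measure_pmf.expectation N G"
proof -
  have "measure_pmf.expectation (pair_pmf M N) (\<lambda>z. g (fst z) * G (snd z)) =
      (\<Sum>z\<in>set_pmf M \<times> set_pmf N. pmf (pair_pmf M N) z *\<^sub>R (g (fst z) * G (snd z)))"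
    by (rule integral_measure_pmf) (use assms in auto)
  also have "\<dots> = (\<Sum>(a,b)\<in>set_pmf M \<times> set_pmf N. (pmf M a * g a) * (pmf N b * G b))"
    by (rule sum.cong) (auto simp: pmf_pair)
  also have "\<dots> = (\<Sum>a\<in>set_pmf M. \<Sum>b\<in>set_pmf N. (pmf M a * g a) * (pmf N b * G b))"
    by (simp add: sum.cartesian_product)
  also have "\<dots> = (\<Sum>a\<in>set_pmf M. pmf M a * g a) * (\<Sum>b\<in>set_pmf N. pmf N b * G b)"
    by (simp add: sum_product)
  also have "(\<Sum>a\<in>set_pmf M. pmf M a * g a) = measure_pmf.expectation M g"
    by (subst integral_measure_pmf[of "set_pmf M"]) (use assms in auto)
  also have "(\<Sum>b\<in>set_pmf N. pmf N b * G b) = measure_pmf.expectation N G"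
    by (subst integral_measure_pmf[of "set_pmf N"]) (use assms in auto)
  finally show ?thesis .
qed

lemma E_factor:
  fixes g :: "'b \<Rightarrow> real" and F :: "('a \<Rightarrow> 'b) \<Rightarrow> real"
  assumes A: "finite A" and e: "e \<in> A"
    and fin: "\<And>x. finite (set_pmf (q x))"
    and indep: "\<And>x b. F (x(e := b)) = F x"
  shows "measure_pmf.expectation (Pi_pmf A d q) (\<lambda>x. g (x e) * F x) =
         measure_pmf.expectation (q e) g * measure_pmf.expectation (Pi_pmf A d q) F"
proof -
  have A': "A = insert e (A - {e})" using e by auto
  have fA: "finite (A - {e})" using A by simp
  have P: "Pi_pmf A d q = map_pmf (\<lambda>(y, f). f(e := y)) (pair_pmf (q e) (Pi_pmf (A - {e}) d q))"
    by (subst A', rule Pi_pmf_insert[OF fA]) simp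
  have f1: "finite (set_pmf (q e))" by (rule fin)
  have f2: "finite (set_pmf (Pi_pmf (A - {e}) d q))" by (rule finite_set_pmf_Pi[OF fA fin])
  have "measure_pmf.expectation (Pi_pmf A d q) (\<lambda>x. g (x e) * F x) =
      measure_pmf.expectation (pair_pmf (q e) (Pi_pmf (A - {e}) d q)) (\<lambda>z. g (fst z) * F (snd z))"
    unfolding P by (simp add: case_prod_beta indep)
  also have "\<dots> = measure_pmf.expectation (q e) g * measure_pmf.expectation (Pi_pmf (A - {e}) d q) F"
    by (rule expectation_pair_prod[OF f1 f2])
  also have "measure_pmf.expectation (Pi_pmf (A - {e}) d q) F = measure_pmf.expectation (Pi_pmf A d q) F"
  proof -
    have "measure_pmf.expectation (Pi_pmf A d q) F =
        measure_pmf.expectation (pair_pmf (q e) (Pi_pmf (A - {e}) d q)) (\<lambda>z. F (snd z))"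
      unfolding P by (simp add: case_prod_beta indep)
    then show ?thesis by simp
  qed
  finally show ?thesis .
qed


definition chiS :: "real \<Rightarrow> nat set set \<Rightarrow> (nat set \<Rightarrow> bool) \<Rightarrow> real" where
  "chiS p S x = (\<Prod>e\<in>S. chi p x e)"

definition chib :: "real \<Rightarrow> bool \<Rightarrow> real" where
  "chib p b = ((if b then 1 else 0) - p) / sqrt (p * (1 - p))"

definition mom :: "real \<Rightarrow> nat \<Rightarrow> real" where
  "mom p j = measure_pmf.expectation (bernoulli_pmf p) (\<lambda>b. chib p b ^ j)"

definition chiL :: "real \<Rightarrow> nat set set list \<Rightarrow> (nat set \<Rightarrow> bool) \<Rightarrow> real" where
  "chiL p Ss x = prod_list (map (\<lambda>S. chiS p S x) Ss)"

definition cnt :: "nat set set list \<Rightarrow> nat set \<Rightarrow> nat" where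
  "cnt Ss e = length (filter (\<lambda>S. e \<in> S) Ss)"

abbreviation EG :: "nat \<Rightarrow> real \<Rightarrow> ((nat set \<Rightarrow> bool) \<Rightarrow> real) \<Rightarrow> real" where
  "EG n p F \<equiv> measure_pmf.expectation (Gnp n p) F"

lemma chi_chib: "chi p x e = chib p (x e)"
  by (simp add: chi_def chib_def)

context
  fixes p :: real
  assumes p0: "0 < p" and p1: "p < 1"
begin

lemma pp_pos: "0 < p * (1 - p)" using p0 p1 by simp

lemma mom0: "mom p 0 = 1" unfolding mom_def using p0 p1 by simp

lemma mom1: "mom p 1 = 0"
  unfolding mom_def chib_def using p0 p1 by (simp add: field_simps)

lemma mom2: "mom p 2 = 1"
proof -
  have s: "sqrt (p * (1 - p)) ^ 2 = p * (1 - p)" using pp_pos by simp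
  have "mom p 2 = ((1 - p)^2 * p + p^2 * (1 - p)) / (sqrt (p * (1 - p)))^2"
    unfolding mom_def chib_def using p0 p1 by (simp add: power_divide add_divide_distrib power2_eq_square)
  also have "\<dots> = 1" unfolding s using pp_pos p0 p1 by (simp add: field_simps power2_eq_square)
  finally show ?thesis .
qed

definition Kc :: real where "Kc = 1 / sqrt (p * (1 - p))"

lemma Kc_ge1: "1 \<le> Kc"
proof -
  have "p * (1 - p) \<le> 1" by (intro mult_le_one) (use p0 p1 in auto)
  then have s1: "sqrt (p * (1 - p)) \<le> 1" by simp
  have s0: "0 < sqrt (p * (1 - p))" using pp_pos by simp
  show ?thesis unfolding Kc_def using s0 s1 by (simp add: le_divide_eq)
qed

lemma chib_bound: "\<bar>chib p b\<bar> \<le> Kc"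
proof -
  have "\<bar>(if b then 1 else 0) - p\<bar> \<le> 1" using p0 p1 by auto
  moreover have s0: "0 < sqrt (p * (1 - p))" using pp_pos by simp
  ultimately show ?thesis unfolding chib_def Kc_def abs_divide
    by (simp add: divide_right_mono)
qed

lemma chi_bound: "\<bar>chi p x e\<bar> \<le> Kc" unfolding chi_chib by (rule chib_bound)

lemma chiS_bound: "finite S \<Longrightarrow> \<bar>chiS p S x\<bar> \<le> Kc ^ card S"
  unfolding chiS_def abs_prod
proof (induction S rule: finite_induct)
  case (insert a F)
  have "\<bar>chi p x a\<bar> * (\<Prod>e\<in>F. \<bar>chi p x e\<bar>) \<le> Kc * Kc ^ card F"
    by (rule mult_mono[OF chi_bound insert.IH]) (use Kc_ge1 in \<open>auto intro: prod_nonneg\<close>)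
  then show ?case using insert by simp
qed simp

lemma mom_bound: "\<bar>mom p j\<bar> \<le> Kc ^ j"
proof -
  have "\<bar>mom p j\<bar> \<le> measure_pmf.expectation (bernoulli_pmf p) (\<lambda>b. \<bar>chib p b ^ j\<bar>)"
    unfolding mom_def by (rule integral_abs_bound)
  also have "\<dots> \<le> measure_pmf.expectation (bernoulli_pmf p) (\<lambda>b. Kc ^ j)"
  proof (rule integral_mono)
    show "integrable (measure_pmf (bernoulli_pmf p)) (\<lambda>b. \<bar>chib p b ^ j\<bar>)"
      by (rule integrable_measure_pmf_finite) (rule finite_subset[of _ UNIV], auto)
    show "integrable (measure_pmf (bernoulli_pmf p)) (\<lambda>b. Kc ^ j)"
      by (rule integrable_measure_pmf_finite) (rule finite_subset[of _ UNIV], auto)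
    fix b show "\<bar>chib p b ^ j\<bar> \<le> Kc ^ j" unfolding power_abs by (rule power_mono[OF chib_bound]) simp
  qed
  also have "\<dots> = Kc ^ j" by simp
  finally show ?thesis .
qed

lemma fin_bern: "finite (set_pmf (bernoulli_pmf p))" by (rule finite_subset[of _ UNIV]) auto

lemma E_chi_factor:
  assumes e: "e \<in> Kedges n" and indep: "\<And>x b. F (x(e := b)) = F x"
  shows "EG n p (\<lambda>x. chi p x e * F x) = 0"
proof -
  have "EG n p (\<lambda>x. chi p x e * F x) = EG n p (\<lambda>x. chib p (x e) * F x)" by (simp add: chi_chib)
  also have "\<dots> = mom p 1 * EG n p F"
    unfolding Gnp_def mom_def
    by (subst E_factor[OF finite_Kedges e _ indep]) (auto intro: fin_bern)
  also have "\<dots> = 0" by (simp only: mom1 mult_zero_left)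
  finally show ?thesis .
qed

lemma E_prod_pow:
  assumes "finite U" "U \<subseteq> Kedges n"
  shows "EG n p (\<lambda>x. \<Prod>e\<in>U. chi p x e ^ k e) = (\<Prod>e\<in>U. mom p (k e))"
  using assms
proof (induction U rule: finite_induct)
  case empty
  then show ?case by simp
next
  case (insert e U)
  have e: "e \<in> Kedges n" using insert by auto
  have "EG n p (\<lambda>x. \<Prod>e'\<in>insert e U. chi p x e' ^ k e') =
        EG n p (\<lambda>x. chib p (x e) ^ k e * (\<Prod>e'\<in>U. chi p x e' ^ k e'))"
    using insert by (simp add: chi_chib)
  also have "\<dots> = mom p (k e) * EG n p (\<lambda>x. \<Prod>e'\<in>U. chi p x e' ^ k e')"
    unfolding Gnp_def mom_def
    by (subst E_factor[OF finite_Kedges e]) (use insert in \<open>auto intro: fin_bern prod.cong simp: chi_def\<close>)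
  also have "\<dots> = (\<Prod>e'\<in>insert e U. mom p (k e'))" using insert by simp
  finally show ?case .
qed

end

lemma cnt_Nil[simp]: "cnt [] e = 0" by (simp add: cnt_def)
lemma cnt_Cons[simp]: "cnt (S # Ss) e = (if e \<in> S then 1 else 0) + cnt Ss e" by (simp add: cnt_def)
lemma cnt_append[simp]: "cnt (Ss @ Ts) e = cnt Ss e + cnt Ts e" by (simp add: cnt_def)
lemma cnt_zero: "e \<notin> \<Union>(set Ss) \<Longrightarrow> cnt Ss e = 0"
  by (induction Ss) auto
lemma cnt_pos: "0 < cnt Ss e \<Longrightarrow> e \<in> \<Union>(set Ss)"
  using cnt_zero by fastforce

lemma chiL_eq:
  assumes "finite V" "\<Union>(set Ss) \<subseteq> V"
  shows "chiL p Ss x = (\<Prod>e\<in>V. chi p x e ^ cnt Ss e)"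
  using assms(2)
proof (induction Ss)
  case Nil
  then show ?case by (simp add: chiL_def)
next
  case (Cons S Ss)
  have SV: "S \<subseteq> V" using Cons by auto
  have "chiS p S x = (\<Prod>e\<in>V. chi p x e ^ (if e \<in> S then 1 else 0))"
    unfolding chiS_def
    by (rule prod.mono_neutral_cong_left[OF assms(1) SV]) auto
  then have "chiL p (S # Ss) x = (\<Prod>e\<in>V. chi p x e ^ (if e \<in> S then 1 else 0)) * (\<Prod>e\<in>V. chi p x e ^ cnt Ss e)"
    using Cons by (simp add: chiL_def)
  also have "\<dots> = (\<Prod>e\<in>V. chi p x e ^ cnt (S # Ss) e)"
    by (simp add: prod.distrib[symmetric] power_add)
  finally show ?case .
qed


context
  fixes p :: real
  assumes p0: "0 < p" and p1: "p < 1"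
begin

lemma E_chiL:
  assumes "finite V" "V \<subseteq> Kedges n" "\<Union>(set Ss) \<subseteq> V"
  shows "EG n p (chiL p Ss) = (\<Prod>e\<in>V. mom p (cnt Ss e))"
proof -
  have "EG n p (chiL p Ss) = EG n p (\<lambda>x. \<Prod>e\<in>V. chi p x e ^ cnt Ss e)"
    using chiL_eq[OF assms(1) assms(3)] by metis
  also have "\<dots> = (\<Prod>e\<in>V. mom p (cnt Ss e))"
    by (rule E_prod_pow[OF p0 p1 assms(1,2)])
  finally show ?thesis .
qed

lemma E_chiL':
  assumes "\<forall>S\<in>set Ss. S \<subseteq> Kedges n"
  shows "EG n p (chiL p Ss) = (\<Prod>e\<in>\<Union>(set Ss). mom p (cnt Ss e))"
proof (rule E_chiL)
  show "\<Union>(set Ss) \<subseteq> Kedges n" using assms by auto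
  then show "finite (\<Union>(set Ss))" using finite_Kedges finite_subset by blast
qed simp

lemma E_chiL_zero:
  assumes "\<forall>S\<in>set Ss. S \<subseteq> Kedges n" "cnt Ss e = 1"
  shows "EG n p (chiL p Ss) = 0"
proof -
  have fin: "finite (\<Union>(set Ss))" using assms(1) finite_Kedges finite_subset by (metis Sup_least)
  have e: "e \<in> \<Union>(set Ss)" using assms(2) cnt_pos by simp
  have "mom p (cnt Ss e) = 0" using assms(2) mom1[OF p0 p1] by simp
  then show ?thesis unfolding E_chiL'[OF assms(1)]
    by (intro prod_zero[OF fin] bexI[OF _ e])
qed

lemma E_chiL_split:
  assumes "\<forall>S\<in>set Ss. S \<subseteq> Kedges n" "\<forall>S\<in>set Ts. S \<subseteq> Kedges n"
    and disj: "\<Union>(set Ss) \<inter> \<Union>(set Ts) = {}"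
  shows "EG n p (chiL p (Ss @ Ts)) = EG n p (chiL p Ss) * EG n p (chiL p Ts)"
proof -
  let ?U = "\<Union>(set Ss)" and ?V = "\<Union>(set Ts)"
  have f1: "finite ?U" using assms(1) finite_Kedges finite_subset by (metis Sup_least)
  have f2: "finite ?V" using assms(2) finite_Kedges finite_subset by (metis Sup_least)
  have "EG n p (chiL p (Ss @ Ts)) = (\<Prod>e\<in>?U \<union> ?V. mom p (cnt (Ss @ Ts) e))"
    by (rule E_chiL) (use f1 f2 assms in auto)
  also have "\<dots> = (\<Prod>e\<in>?U. mom p (cnt (Ss @ Ts) e)) * (\<Prod>e\<in>?V. mom p (cnt (Ss @ Ts) e))"
    by (rule prod.union_disjoint[OF f1 f2 disj])
  also have "(\<Prod>e\<in>?U. mom p (cnt (Ss @ Ts) e)) = (\<Prod>e\<in>?U. mom p (cnt Ss e))"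
  proof (rule prod.cong)
    fix x assume "x \<in> ?U"
    then have "x \<notin> ?V" using disj by blast
    then show "mom p (cnt (Ss @ Ts) x) = mom p (cnt Ss x)" using cnt_zero[of x Ts] by simp
  qed simp
  also have "(\<Prod>e\<in>?V. mom p (cnt (Ss @ Ts) e)) = (\<Prod>e\<in>?V. mom p (cnt Ts e))"
  proof (rule prod.cong)
    fix x assume "x \<in> ?V"
    then have "x \<notin> ?U" using disj by blast
    then show "mom p (cnt (Ss @ Ts) x) = mom p (cnt Ts x)" using cnt_zero[of x Ss] by simp
  qed simp
  finally show ?thesis using E_chiL'[OF assms(1)] E_chiL'[OF assms(2)] by simp
qed

lemma E_orth:
  assumes "S \<subseteq> Kedges n" "S' \<subseteq> Kedges n"
  shows "EG n p (\<lambda>x. chiS p S x * chiS p S' x) = (if S = S' then 1 else 0)"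
proof -
  have eq: "(\<lambda>x. chiS p S x * chiS p S' x) = chiL p [S, S']" by (simp add: chiL_def fun_eq_iff)
  show ?thesis
  proof (cases "S = S'")
    case True
    have "EG n p (chiL p [S, S']) = (\<Prod>e\<in>\<Union>(set [S, S']). mom p (cnt [S, S'] e))"
      by (rule E_chiL') (use assms in auto)
    also have "\<dots> = (\<Prod>e\<in>S. mom p 2)" using True by (intro prod.cong) (auto simp: numeral_2_eq_2)
    also have "\<dots> = 1" by (simp add: mom2[OF p0 p1])
    finally show ?thesis using True eq by simp
  next
    case False
    then obtain e where "(e \<in> S \<and> e \<notin> S') \<or> (e \<in> S' \<and> e \<notin> S)" by blast
    then have "cnt [S, S'] e = 1" by auto
    then have "EG n p (chiL p [S, S']) = 0" by (rule E_chiL_zero[rotated]) (use assms in auto)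
    then show ?thesis using False eq by simp
  qed
qed

lemma E_chiS_zero:
  assumes "S \<subseteq> Kedges n" "S \<noteq> {}"
  shows "EG n p (chiS p S) = 0"
proof -
  obtain e where e: "e \<in> S" using assms(2) by blast
  have "chiS p S = chiL p [S]" by (simp add: chiL_def fun_eq_iff)
  moreover have "EG n p (chiL p [S]) = 0" by (rule E_chiL_zero[of "[S]" n e]) (use assms e in auto)
  ultimately show ?thesis by simp
qed

lemma chiL_bound:
  assumes "\<forall>S\<in>set Ss. finite S \<and> card S \<le> 3"
  shows "\<bar>chiL p Ss x\<bar> \<le> Kc p ^ (3 * length Ss)"
  using assms
proof (induction Ss)
  case Nil
  then show ?case by (simp add: chiL_def)
next
  case (Cons S Ss)
  have k1: "1 \<le> Kc p" by (rule Kc_ge1[OF p0 p1])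
  have "\<bar>chiS p S x\<bar> \<le> Kc p ^ card S" using Cons.prems by (intro chiS_bound[OF p0 p1]) auto
  also have "\<dots> \<le> Kc p ^ 3" using Cons.prems k1 by (intro power_increasing) auto
  finally have a: "\<bar>chiS p S x\<bar> \<le> Kc p ^ 3" .
  have b: "\<bar>chiL p Ss x\<bar> \<le> Kc p ^ (3 * length Ss)" using Cons by auto
  have "\<bar>chiL p (S # Ss) x\<bar> = \<bar>chiS p S x\<bar> * \<bar>chiL p Ss x\<bar>" by (simp add: chiL_def abs_mult)
  also have "\<dots> \<le> Kc p ^ 3 * Kc p ^ (3 * length Ss)"
    by (rule mult_mono[OF a b]) (use k1 in auto)
  also have "\<dots> = Kc p ^ (3 * length (S # Ss))" by (simp add: power_add[symmetric])
  finally show ?case .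
qed

end


lemma taylor_bound:
  fixes f f' :: "real \<Rightarrow> real"
  assumes der: "\<And>w. (f has_real_derivative f' w) (at w)"
    and lip: "\<And>x y. \<bar>f' x - f' y\<bar> \<le> B * \<bar>x - y\<bar>"
  shows "\<bar>f a - f (a - v) - v * f' a\<bar> \<le> B * v\<^sup>2"
proof (cases v "0::real" rule: linorder_cases)
  case equal then show ?thesis by simp
next
  case greater
  obtain z where z: "a - v < z" "z < a" "f a - f (a - v) = (a - (a - v)) * f' z"
    using MVT2[of "a - v" a f f'] greater der by auto
  have "f a - f (a - v) - v * f' a = v * (f' z - f' a)" using z(3) by (simp add: algebra_simps)
  then have "\<bar>f a - f (a - v) - v * f' a\<bar> = \<bar>v\<bar> * \<bar>f' z - f' a\<bar>" by (simp add: abs_mult)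
  also have "\<dots> \<le> \<bar>v\<bar> * (B * \<bar>z - a\<bar>)" by (intro mult_left_mono lip) simp
  also have "\<dots> \<le> \<bar>v\<bar> * (B * \<bar>v\<bar>)"
  proof -
    have B: "0 \<le> B" using lip[of 0 1] abs_ge_zero[of "f' 0 - f' 1"] by simp
    have "\<bar>z - a\<bar> \<le> \<bar>v\<bar>" using z greater by auto
    then show ?thesis using B by (intro mult_left_mono) auto
  qed
  also have "\<dots> = B * v\<^sup>2" by (simp add: power2_eq_square abs_mult_self_eq)
  finally show ?thesis .
next
  case less
  obtain z where z: "a < z" "z < a - v" "f (a - v) - f a = ((a - v) - a) * f' z"
    using MVT2[of a "a - v" f f'] less der by auto
  have "f a - f (a - v) - v * f' a = v * (f' z - f' a)" using z(3) by (simp add: algebra_simps)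
  then have "\<bar>f a - f (a - v) - v * f' a\<bar> = \<bar>v\<bar> * \<bar>f' z - f' a\<bar>" by (simp add: abs_mult)
  also have "\<dots> \<le> \<bar>v\<bar> * (B * \<bar>z - a\<bar>)" by (intro mult_left_mono lip) simp
  also have "\<dots> \<le> \<bar>v\<bar> * (B * \<bar>v\<bar>)"
  proof -
    have B: "0 \<le> B" using lip[of 0 1] abs_ge_zero[of "f' 0 - f' 1"] by simp
    have "\<bar>z - a\<bar> \<le> \<bar>v\<bar>" using z less by auto
    then show ?thesis using B by (intro mult_left_mono) auto
  qed
  also have "\<dots> = B * v\<^sup>2" by (simp add: power2_eq_square abs_mult_self_eq)
  finally show ?thesis .
qed

lemma stein_local:
  fixes M :: "'a pmf" and X :: "'i \<Rightarrow> 'a \<Rightarrow> real" and I :: "'i set" and N :: "'i \<Rightarrow> 'i set"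
    and f f' :: "real \<Rightarrow> real"
  assumes finM: "finite (set_pmf M)"
    and indep: "\<And>i G. i \<in> I \<Longrightarrow> measure_pmf.expectation M
        (\<lambda>x. X i x * G ((\<Sum>j\<in>I. X j x) - (\<Sum>j\<in>N i. X j x))) = 0"
    and der: "\<And>w. (f has_real_derivative f' w) (at w)"
    and lip: "\<And>x y. \<bar>f' x - f' y\<bar> \<le> B * \<bar>x - y\<bar>"
    and bnd: "\<And>w. \<bar>f' w\<bar> \<le> A"
  shows "\<bar>measure_pmf.expectation M (\<lambda>x. f' (\<Sum>j\<in>I. X j x) - (\<Sum>j\<in>I. X j x) * f (\<Sum>j\<in>I. X j x))\<bar>
    \<le> B * (\<Sum>i\<in>I. measure_pmf.expectation M (\<lambda>x. \<bar>X i x\<bar> * (\<Sum>j\<in>N i. X j x)\<^sup>2))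
      + A * measure_pmf.expectation M (\<lambda>x. \<bar>1 - (\<Sum>i\<in>I. X i x * (\<Sum>j\<in>N i. X j x))\<bar>)"
proof -
  have int: "integrable (measure_pmf M) (F :: 'a \<Rightarrow> real)" for F
    by (rule integrable_measure_pmf_finite[OF finM])
  define W where "W x = (\<Sum>j\<in>I. X j x)" for x
  define V where "V i x = (\<Sum>j\<in>N i. X j x)" for i x
  define T where "T x = (\<Sum>i\<in>I. X i x * V i x)" for x
  define r where "r i x = f (W x) - f (W x - V i x) - V i x * f' (W x)" for i x
  have pt: "f' (W x) - W x * f (W x) = f' (W x) * (1 - T x) - (\<Sum>i\<in>I. X i x * r i x)
      - (\<Sum>i\<in>I. X i x * f (W x - V i x))" for x
  proof -
    have "W x * f (W x) = (\<Sum>i\<in>I. X i x * f (W x))" unfolding W_def by (simp add: sum_distrib_right)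
    also have "\<dots> = (\<Sum>i\<in>I. X i x * f (W x - V i x) + f' (W x) * (X i x * V i x) + X i x * r i x)"
      by (rule sum.cong) (auto simp: r_def algebra_simps)
    also have "\<dots> = (\<Sum>i\<in>I. X i x * f (W x - V i x)) + f' (W x) * T x + (\<Sum>i\<in>I. X i x * r i x)"
      by (simp add: sum.distrib T_def sum_distrib_left)
    finally show ?thesis by (simp add: algebra_simps)
  qed
  have z: "measure_pmf.expectation M (\<lambda>x. \<Sum>i\<in>I. X i x * f (W x - V i x)) = 0"
  proof -
    have "measure_pmf.expectation M (\<lambda>x. \<Sum>i\<in>I. X i x * f (W x - V i x)) =
        (\<Sum>i\<in>I. measure_pmf.expectation M (\<lambda>x. X i x * f (W x - V i x)))"
      by (rule Bochner_Integration.integral_sum) (rule int)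
    also have "\<dots> = 0" using indep[of _ f] unfolding W_def V_def by simp
    finally show ?thesis .
  qed
  have "measure_pmf.expectation M (\<lambda>x. f' (W x) - W x * f (W x)) =
      measure_pmf.expectation M (\<lambda>x. f' (W x) * (1 - T x)) - measure_pmf.expectation M (\<lambda>x. \<Sum>i\<in>I. X i x * r i x)
      - measure_pmf.expectation M (\<lambda>x. \<Sum>i\<in>I. X i x * f (W x - V i x))"
    unfolding pt by (simp add: Bochner_Integration.integral_diff[OF int int])
  also have "\<dots> = measure_pmf.expectation M (\<lambda>x. f' (W x) * (1 - T x)) -
      (\<Sum>i\<in>I. measure_pmf.expectation M (\<lambda>x. X i x * r i x))"
    by (simp add: z Bochner_Integration.integral_sum[OF int])
  finally have eq: "measure_pmf.expectation M (\<lambda>x. f' (W x) - W x * f (W x)) = \<dots>" .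
  have b1: "\<bar>measure_pmf.expectation M (\<lambda>x. f' (W x) * (1 - T x))\<bar> \<le> A * measure_pmf.expectation M (\<lambda>x. \<bar>1 - T x\<bar>)"
  proof -
    have "\<bar>measure_pmf.expectation M (\<lambda>x. f' (W x) * (1 - T x))\<bar> \<le> measure_pmf.expectation M (\<lambda>x. \<bar>f' (W x) * (1 - T x)\<bar>)"
      by (rule integral_abs_bound)
    also have "\<dots> \<le> measure_pmf.expectation M (\<lambda>x. A * \<bar>1 - T x\<bar>)"
    proof (intro integral_mono int)
      fix x
      have "\<bar>f' (W x) * (1 - T x)\<bar> = \<bar>f' (W x)\<bar> * \<bar>1 - T x\<bar>" by (simp add: abs_mult)
      also have "\<dots> \<le> A * \<bar>1 - T x\<bar>" by (rule mult_right_mono[OF bnd]) simp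
      finally show "\<bar>f' (W x) * (1 - T x)\<bar> \<le> A * \<bar>1 - T x\<bar>" .
    qed
    finally show ?thesis by simp
  qed
  have b2: "\<bar>measure_pmf.expectation M (\<lambda>x. X i x * r i x)\<bar> \<le> B * measure_pmf.expectation M (\<lambda>x. \<bar>X i x\<bar> * (V i x)\<^sup>2)" for i
  proof -
    have "\<bar>measure_pmf.expectation M (\<lambda>x. X i x * r i x)\<bar> \<le> measure_pmf.expectation M (\<lambda>x. \<bar>X i x * r i x\<bar>)"
      by (rule integral_abs_bound)
    also have "\<dots> \<le> measure_pmf.expectation M (\<lambda>x. B * (\<bar>X i x\<bar> * (V i x)\<^sup>2))"
    proof (intro integral_mono int)
      fix x
      have "\<bar>r i x\<bar> \<le> B * (V i x)\<^sup>2" unfolding r_def by (rule taylor_bound[OF der lip])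
      then have "\<bar>X i x\<bar> * \<bar>r i x\<bar> \<le> \<bar>X i x\<bar> * (B * (V i x)\<^sup>2)" by (rule mult_left_mono) simp
      then show "\<bar>X i x * r i x\<bar> \<le> B * (\<bar>X i x\<bar> * (V i x)\<^sup>2)"
        by (simp add: abs_mult mult_ac)
    qed
    finally show ?thesis by simp
  qed
  have "\<bar>measure_pmf.expectation M (\<lambda>x. f' (W x) - W x * f (W x))\<bar> \<le>
      \<bar>measure_pmf.expectation M (\<lambda>x. f' (W x) * (1 - T x))\<bar> + (\<Sum>i\<in>I. \<bar>measure_pmf.expectation M (\<lambda>x. X i x * r i x)\<bar>)"
  proof -
    have "\<bar>measure_pmf.expectation M (\<lambda>x. f' (W x) * (1 - T x)) - (\<Sum>i\<in>I. measure_pmf.expectation M (\<lambda>x. X i x * r i x))\<bar>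
      \<le> \<bar>measure_pmf.expectation M (\<lambda>x. f' (W x) * (1 - T x))\<bar> + \<bar>\<Sum>i\<in>I. measure_pmf.expectation M (\<lambda>x. X i x * r i x)\<bar>"
      by (rule abs_triangle_ineq4)
    also have "\<dots> \<le> \<bar>measure_pmf.expectation M (\<lambda>x. f' (W x) * (1 - T x))\<bar> + (\<Sum>i\<in>I. \<bar>measure_pmf.expectation M (\<lambda>x. X i x * r i x)\<bar>)"
      by (intro add_left_mono sum_abs)
    finally show ?thesis unfolding eq .
  qed
  also have "\<dots> \<le> A * measure_pmf.expectation M (\<lambda>x. \<bar>1 - T x\<bar>) +
      (\<Sum>i\<in>I. B * measure_pmf.expectation M (\<lambda>x. \<bar>X i x\<bar> * (V i x)\<^sup>2))"
    by (intro add_mono b1 sum_mono b2)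
  finally show ?thesis unfolding W_def V_def T_def by (simp add: sum_distrib_left algebra_simps)
qed


definition I3 :: "nat \<Rightarrow> nat set set set" where
  "I3 n = {E. E \<subseteq> Kedges n \<and> card (vtx E) = 3}"

definition pairs :: "nat set \<Rightarrow> nat set set" where
  "pairs V = {e. e \<subseteq> V \<and> card e = 2}"

lemma finite_I3: "finite (I3 n)"
proof -
  have "I3 n \<subseteq> Pow (Kedges n)" unfolding I3_def by auto
  then show ?thesis using finite_Kedges[of n] by (meson finite_Pow_iff finite_subset)
qed

lemma card_pairs: "finite V \<Longrightarrow> card (pairs V) = card V choose 2"
  unfolding pairs_def by (rule n_subsets)

lemma finite_pairs: "finite V \<Longrightarrow> finite (pairs V)"
  unfolding pairs_def by auto

context
  fixes E :: "nat set set" and n :: nat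
  assumes E: "E \<in> I3 n"
begin

lemma I3_sub: "E \<subseteq> Kedges n" using E by (simp add: I3_def)
lemma I3_card_vtx: "card (vtx E) = 3" using E by (simp add: I3_def)
lemma I3_fin_vtx: "finite (vtx E)" using I3_card_vtx by (metis card.infinite zero_neq_numeral)
lemma I3_edge: "g \<in> E \<Longrightarrow> card g = 2 \<and> g \<subseteq> vtx E"
  using I3_sub unfolding Kedges_def vtx_def by auto
lemma I3_vtx_range: "vtx E \<subseteq> {0..<n}" using I3_sub unfolding Kedges_def vtx_def by auto
lemma I3_pairs: "E \<subseteq> pairs (vtx E)" using I3_edge unfolding pairs_def by auto
lemma I3_finite: "finite E" using finite_subset[OF I3_pairs finite_pairs[OF I3_fin_vtx]] .
lemma I3_card: "card E \<le> 3"
proof -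
  have "card E \<le> card (pairs (vtx E))" by (rule card_mono[OF finite_pairs[OF I3_fin_vtx] I3_pairs])
  also have "\<dots> = 3" by (simp add: card_pairs[OF I3_fin_vtx] I3_card_vtx numeral_3_eq_3 numeral_2_eq_2)
  finally show ?thesis .
qed
lemma I3_nonempty: "E \<noteq> {}" using I3_card_vtx by (auto simp: vtx_def)
lemma I3_vtx_edge: "v \<in> vtx E \<Longrightarrow> \<exists>g\<in>E. v \<in> g" unfolding vtx_def by auto

end

lemma graph_iso_sym:
  assumes "graph_iso G H" shows "graph_iso H G"
proof -
  obtain f where f: "bij_betw f (vtx G) (vtx H)" "(\<lambda>e. f ` e) ` G = H"
    using assms unfolding graph_iso_def by blast
  define g where "g = the_inv_into (vtx G) f"
  have g: "bij_betw g (vtx H) (vtx G)" unfolding g_def by (rule bij_betw_the_inv_into[OF f(1)])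
  have sub: "e \<subseteq> vtx G" if "e \<in> G" for e using that unfolding vtx_def by auto
  have inv: "g ` (f ` e) = e" if "e \<subseteq> vtx G" for e
  proof -
    have "g ` (f ` e) = (g \<circ> f) ` e" by (simp add: image_comp)
    also have "\<dots> = e" using that f(1) unfolding g_def
      by (auto simp: bij_betw_def the_inv_into_f_f subset_iff image_iff)
    finally show ?thesis .
  qed
  have "(\<lambda>e. g ` e) ` H = G"
  proof -
    have "(\<lambda>e. g ` e) ` H = (\<lambda>e. g ` (f ` e)) ` G" using f(2) by auto
    also have "\<dots> = G" using inv sub by (auto simp: image_iff)
    finally show ?thesis .
  qed
  then show ?thesis unfolding graph_iso_def using g by blast
qed

lemma graph_iso_trans:
  assumes "graph_iso F G" "graph_iso G H" shows "graph_iso F H"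
proof -
  obtain f1 where f1: "bij_betw f1 (vtx F) (vtx G)" "(\<lambda>e. f1 ` e) ` F = G"
    using assms(1) unfolding graph_iso_def by blast
  obtain f2 where f2: "bij_betw f2 (vtx G) (vtx H)" "(\<lambda>e. f2 ` e) ` G = H"
    using assms(2) unfolding graph_iso_def by blast
  have "bij_betw (f2 \<circ> f1) (vtx F) (vtx H)" by (rule bij_betw_trans[OF f1(1) f2(1)])
  moreover have "(\<lambda>e. (f2 \<circ> f1) ` e) ` F = H"
    using f1(2) f2(2) by (auto simp: image_comp[symmetric] image_image)
  ultimately show ?thesis unfolding graph_iso_def by blast
qed

lemma graph_iso_card_vtx: "graph_iso G H \<Longrightarrow> card (vtx G) = card (vtx H)"
  unfolding graph_iso_def using bij_betw_same_card by blast

lemma graph_copy: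
  assumes H: "is_graph H" and fin: "finite (vtx H)" and T: "finite T" "card T = card (vtx H)"
  shows "\<exists>E. graph_iso E H \<and> vtx E = T \<and> (\<forall>g\<in>E. card g = 2 \<and> g \<subseteq> T)"
proof -
  obtain f where f: "bij_betw f (vtx H) T" using finite_same_card_bij[OF fin T(1)] T(2) by metis
  define E where "E = (\<lambda>e. f ` e) ` H"
  have iso: "graph_iso H E" unfolding graph_iso_def
  proof (intro exI conjI)
    have "vtx E = f ` vtx H" unfolding E_def vtx_def by auto
    then show "bij_betw f (vtx H) (vtx E)" using f by (simp add: bij_betw_def)
  qed (simp add: E_def)
  have vE: "vtx E = T" using f unfolding E_def vtx_def bij_betw_def by auto
  have "card g = 2 \<and> g \<subseteq> T" if gE: "g \<in> E" for g
  proof -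
    obtain e where e: "e \<in> H" "g = f ` e" using gE unfolding E_def by auto
    have "e \<subseteq> vtx H" using e(1) unfolding vtx_def by auto
    then have "inj_on f e" using f unfolding bij_betw_def by (meson inj_on_subset)
    then have "card g = card e" using e(2) by (simp add: card_image)
    also have "card e = 2" using H e(1) unfolding is_graph_def by auto
    finally show ?thesis using \<open>g \<in> E\<close> vE unfolding vtx_def by auto
  qed
  then show ?thesis using graph_iso_sym[OF iso] vE by blast
qed


definition H3 :: "nat set set set \<Rightarrow> nat set set set" where "H3 \<H> = {H\<in>\<H>. nv H = 3}"

definition cf :: "nat \<Rightarrow> nat set set set \<Rightarrow> nat \<Rightarrow> (nat set set \<Rightarrow> real) \<Rightarrow> nat set set \<Rightarrow> real" where
  "cf l \<H> n \<Delta> E = (\<Sum>H\<in>H3 \<H>. if graph_iso E H then real n ^ (l - 3) * \<Delta> H else 0)"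

lemma nv_fin: "nv H = 3 \<Longrightarrow> finite (vtx H)"
  unfolding nv_def by (metis card.infinite zero_neq_numeral)

locale gsetup =
  fixes \<H> :: "nat set set set"
  assumes graphs: "\<forall>H\<in>\<H>. is_graph H"
    and noniso: "\<forall>G\<in>\<H>. \<forall>H\<in>\<H>. G \<noteq> H \<longrightarrow> \<not> graph_iso G H"
begin

lemma iso_unique: "G \<in> \<H> \<Longrightarrow> H \<in> \<H> \<Longrightarrow> graph_iso E G \<Longrightarrow> graph_iso E H \<Longrightarrow> G = H"
  using noniso graph_iso_sym graph_iso_trans by blast

lemma finite_H3: "finite (H3 \<H>)"
proof -
  define g where "g H = {E. E \<subseteq> Kedges 3 \<and> graph_iso E H}" for H
  have ne: "\<exists>E. E \<in> g H" if "H \<in> H3 \<H>" for H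
  proof -
    have H: "is_graph H" "nv H = 3" using that graphs unfolding H3_def by auto
    obtain E where E: "graph_iso E H" "vtx E = {0..<3}" "\<forall>g\<in>E. card g = 2 \<and> g \<subseteq> {0..<3}"
      using graph_copy[OF H(1) nv_fin[OF H(2)], of "{0..<3}"] H(2) unfolding nv_def by auto
    have "E \<subseteq> Kedges 3" using E(3) unfolding Kedges_def by auto
    then show ?thesis using E(1) unfolding g_def by blast
  qed
  have "inj_on g (H3 \<H>)"
  proof (rule inj_onI)
    fix H1 H2 assume h: "H1 \<in> H3 \<H>" "H2 \<in> H3 \<H>" "g H1 = g H2"
    obtain E where "E \<in> g H1" using ne[OF h(1)] by blast
    then have "graph_iso E H1" "graph_iso E H2" using h(3) unfolding g_def by auto
    then show "H1 = H2" using iso_unique h(1,2) unfolding H3_def by blast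
  qed
  moreover have "g ` H3 \<H> \<subseteq> Pow (Pow (Kedges 3))" unfolding g_def by auto
  then have "finite (g ` H3 \<H>)" using finite_Kedges[of 3] by (meson finite_Pow_iff finite_subset)
  ultimately show ?thesis using finite_imageD by blast
qed

lemma iso_I3: "E \<subseteq> Kedges n \<Longrightarrow> H \<in> H3 \<H> \<Longrightarrow> graph_iso E H \<Longrightarrow> E \<in> I3 n"
  unfolding I3_def H3_def nv_def using graph_iso_card_vtx by auto

lemma W3_eq: "Wk l \<H> \<Delta> n p 3 x = (\<Sum>E\<in>I3 n. cf l \<H> n \<Delta> E * chiS p E x)"
proof -
  have g: "gammaH n p H x = (\<Sum>E\<in>I3 n. if graph_iso E H then chiS p E x else 0)" if H: "H \<in> H3 \<H>" for H
  proof -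
    have "{E. E \<subseteq> Kedges n \<and> graph_iso E H} = {E\<in>I3 n. graph_iso E H}"
      using iso_I3[OF _ H] unfolding I3_def by auto
    then show ?thesis unfolding gammaH_def chiS_def
      by (simp add: sum.inter_filter[OF finite_I3])
  qed
  have "Wk l \<H> \<Delta> n p 3 x = (\<Sum>H\<in>H3 \<H>. real n ^ (l - 3) * \<Delta> H * gammaH n p H x)"
    unfolding Wk_def H3_def by (rule sum.cong) auto
  also have "\<dots> = (\<Sum>H\<in>H3 \<H>. \<Sum>E\<in>I3 n. (if graph_iso E H then real n ^ (l - 3) * \<Delta> H else 0) * chiS p E x)"
    by (rule sum.cong) (auto simp: g sum_distrib_left intro!: sum.cong)
  also have "\<dots> = (\<Sum>E\<in>I3 n. \<Sum>H\<in>H3 \<H>. (if graph_iso E H then real n ^ (l - 3) * \<Delta> H else 0) * chiS p E x)"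
    by (rule sum.swap)
  also have "\<dots> = (\<Sum>E\<in>I3 n. cf l \<H> n \<Delta> E * chiS p E x)"
    unfolding cf_def by (simp add: sum_distrib_right)
  finally show ?thesis .
qed

lemma cf_bound:
  assumes "\<forall>H\<in>\<H>. \<bar>\<Delta> H\<bar> \<le> 1 / lam"
  shows "\<bar>cf l \<H> n \<Delta> E\<bar> \<le> real n ^ (l - 3) * (real (card (H3 \<H>)) / lam)"
proof -
  have "\<bar>cf l \<H> n \<Delta> E\<bar> \<le> (\<Sum>H\<in>H3 \<H>. \<bar>if graph_iso E H then real n ^ (l - 3) * \<Delta> H else 0\<bar>)"
    unfolding cf_def by (rule sum_abs)
  also have "\<dots> \<le> (\<Sum>H\<in>H3 \<H>. real n ^ (l - 3) * (1 / lam))"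
  proof (rule sum_mono)
    fix H assume "H \<in> H3 \<H>"
    then have "\<bar>\<Delta> H\<bar> \<le> 1 / lam" using assms unfolding H3_def by auto
    moreover have "0 \<le> 1 / lam" using calculation by linarith
    then have "real n ^ (l - 3) * \<bar>\<Delta> H\<bar> \<le> real n ^ (l - 3) * (1 / lam)"
      using \<open>\<bar>\<Delta> H\<bar> \<le> 1 / lam\<close> by (intro mult_left_mono) auto
    then show "\<bar>if graph_iso E H then real n ^ (l - 3) * \<Delta> H else 0\<bar> \<le> real n ^ (l - 3) * (1 / lam)"
      using \<open>0 \<le> 1 / lam\<close> by (auto simp: abs_mult)
  qed
  also have "\<dots> = real n ^ (l - 3) * (real (card (H3 \<H>)) / lam)" by simp
  finally show ?thesis .
qed

lemma cf_copy:
  assumes H': "H' \<in> H3 \<H>" and iso: "graph_iso E H'"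
  shows "cf l \<H> n \<Delta> E = real n ^ (l - 3) * \<Delta> H'"
proof -
  have "cf l \<H> n \<Delta> E = (\<Sum>H\<in>H3 \<H>. if H = H' then real n ^ (l - 3) * \<Delta> H else 0)"
    unfolding cf_def
  proof (rule sum.cong)
    fix H assume H: "H \<in> H3 \<H>"
    have "graph_iso E H \<longleftrightarrow> H = H'"
      using iso_unique[of H H' E] H H' iso unfolding H3_def by auto
    then show "(if graph_iso E H then real n ^ (l - 3) * \<Delta> H else 0) = (if H = H' then real n ^ (l - 3) * \<Delta> H else 0)"
      by simp
  qed simp
  also have "\<dots> = real n ^ (l - 3) * \<Delta> H'" using H' finite_H3 by (simp add: sum.delta)
  finally show ?thesis .
qed

lemma count_copies:
  assumes H': "H' \<in> H3 \<H>"
  shows "n choose 3 \<le> card {E\<in>I3 n. graph_iso E H'}"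
proof -
  have H: "is_graph H'" "nv H' = 3" using H' graphs unfolding H3_def by auto
  define Ts where "Ts = {T. T \<subseteq> {0..<n} \<and> card T = 3}"
  have cT: "card Ts = n choose 3" unfolding Ts_def using n_subsets[of "{0..<n}" 3] by simp
  define cp where "cp T = (SOME E. graph_iso E H' \<and> vtx E = T \<and> (\<forall>g\<in>E. card g = 2 \<and> g \<subseteq> T))" for T
  have cpP: "graph_iso (cp T) H' \<and> vtx (cp T) = T \<and> (\<forall>g\<in>cp T. card g = 2 \<and> g \<subseteq> T)" if "T \<in> Ts" for T
  proof -
    have "finite T" "card T = card (vtx H')" using that H(2) unfolding Ts_def nv_def
      by (auto intro: finite_subset)
    then have "\<exists>E. graph_iso E H' \<and> vtx E = T \<and> (\<forall>g\<in>E. card g = 2 \<and> g \<subseteq> T)"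
      by (rule graph_copy[OF H(1) nv_fin[OF H(2)]])
    then show ?thesis unfolding cp_def by (rule someI_ex)
  qed
  have "inj_on cp Ts" by (rule inj_onI) (metis cpP)
  moreover have "cp ` Ts \<subseteq> {E\<in>I3 n. graph_iso E H'}"
  proof
    fix E assume "E \<in> cp ` Ts"
    then obtain T where T: "T \<in> Ts" "E = cp T" by blast
    have "E \<subseteq> Kedges n" using cpP[OF T(1)] T unfolding Kedges_def Ts_def by auto
    moreover have "card (vtx E) = 3" using cpP[OF T(1)] T unfolding Ts_def by auto
    ultimately show "E \<in> {E\<in>I3 n. graph_iso E H'}" using cpP[OF T(1)] T unfolding I3_def by auto
  qed
  moreover have "finite {E\<in>I3 n. graph_iso E H'}" using finite_I3 by auto
  ultimately have "card Ts \<le> card {E\<in>I3 n. graph_iso E H'}" by (rule card_inj_on_le)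
  then show ?thesis using cT by simp
qed

end


lemma choose_le_pow: "n choose k \<le> n ^ k"
  by (cases "k \<le> n") (auto simp: binomial_le_pow binomial_eq_0)

lemma pairs_mono: "A \<subseteq> B \<Longrightarrow> pairs A \<subseteq> pairs B" unfolding pairs_def by auto

lemma card_small_subsets:
  assumes "1 \<le> n"
  shows "card {U. U \<subseteq> {0..<n} \<and> card U \<le> k} \<le> (k + 1) * n ^ k"
proof -
  have eq: "{U. U \<subseteq> {0..<n} \<and> card U \<le> k} = (\<Union>j\<in>{0..k}. {U. U \<subseteq> {0..<n} \<and> card U = j})" by auto
  have "card {U. U \<subseteq> {0..<n} \<and> card U \<le> k} \<le> (\<Sum>j\<in>{0..k}. card {U. U \<subseteq> {0..<n} \<and> card U = j})"
    unfolding eq by (rule card_UN_le) simp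
  also have "\<dots> = (\<Sum>j\<in>{0..k}. n choose j)" by (simp add: n_subsets)
  also have "\<dots> \<le> (\<Sum>j\<in>{0..k}. n ^ k)"
  proof (rule sum_mono)
    fix j assume "j \<in> {0..k}"
    then have "n ^ j \<le> n ^ k" using assms by (intro power_increasing) auto
    then show "n choose j \<le> n ^ k" using choose_le_pow[of n j] by linarith
  qed
  also have "\<dots> = (k + 1) * n ^ k" by simp
  finally show ?thesis .
qed

lemma count_lists:
  assumes n: "1 \<le> n"
    and Q: "\<And>xs. xs \<in> Q \<Longrightarrow> length xs = r \<and> set xs \<subseteq> I3 n \<and> card (\<Union>E\<in>set xs. vtx E) \<le> k"
  shows "card Q \<le> (k + 1) * n ^ k * (2 ^ (k * k)) ^ r"
proof -
  define UU where "UU = {U. U \<subseteq> {0..<n} \<and> card U \<le> k}"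
  define L where "L U = {xs. set xs \<subseteq> Pow (pairs U) \<and> length xs = r}" for U
  have finUU: "finite UU" unfolding UU_def by auto
  have sub: "Q \<subseteq> (\<Union>U\<in>UU. L U)"
  proof
    fix xs assume xs: "xs \<in> Q"
    define U where "U = (\<Union>E\<in>set xs. vtx E)"
    have "U \<subseteq> {0..<n}" unfolding U_def using Q[OF xs] I3_vtx_range by blast
    then have "U \<in> UU" unfolding UU_def U_def using Q[OF xs] by auto
    moreover have "xs \<in> L U"
    proof -
      have "E \<subseteq> pairs U" if "E \<in> set xs" for E
      proof -
        have "E \<in> I3 n" using that Q[OF xs] by auto
        then have "E \<subseteq> pairs (vtx E)" by (rule I3_pairs)
        also have "pairs (vtx E) \<subseteq> pairs U" using that unfolding U_def by (intro pairs_mono) auto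
        finally show ?thesis .
      qed
      then show ?thesis unfolding L_def using Q[OF xs] by auto
    qed
    ultimately show "xs \<in> (\<Union>U\<in>UU. L U)" by blast
  qed
  have finL: "finite (L U)" if "U \<in> UU" for U
  proof -
    have "finite U" using that unfolding UU_def by (auto intro: finite_subset)
    then have "finite (Pow (pairs U))" by (simp add: finite_pairs)
    then show ?thesis unfolding L_def by (rule finite_lists_length_eq)
  qed
  have cL: "card (L U) \<le> (2 ^ (k * k)) ^ r" if "U \<in> UU" for U
  proof -
    have fU: "finite U" using that unfolding UU_def by (auto intro: finite_subset)
    have cU: "card U \<le> k" using that unfolding UU_def by auto
    have "card (L U) = (2 ^ card (pairs U)) ^ r"
      unfolding L_def using fU by (simp add: card_lists_length_eq finite_pairs card_Pow)
    also have "card (pairs U) \<le> k * k"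
    proof -
      have "card (pairs U) = card U choose 2" by (rule card_pairs[OF fU])
      also have "\<dots> \<le> card U ^ 2" by (rule choose_le_pow)
      also have "\<dots> \<le> k ^ 2" using cU by (rule power_mono) simp
      finally show ?thesis by (simp add: power2_eq_square)
    qed
    then have "(2::nat) ^ card (pairs U) \<le> 2 ^ (k * k)" by (intro power_increasing) auto
    then have "(2 ^ card (pairs U)) ^ r \<le> ((2::nat) ^ (k * k)) ^ r" by (rule power_mono) simp
    finally show ?thesis .
  qed
  have "card Q \<le> card (\<Union>U\<in>UU. L U)"
    by (rule card_mono[OF _ sub]) (use finUU finL in auto)
  also have "\<dots> \<le> (\<Sum>U\<in>UU. card (L U))" by (rule card_UN_le[OF finUU])
  also have "\<dots> \<le> (\<Sum>U\<in>UU. (2 ^ (k * k)) ^ r)" by (rule sum_mono) (rule cL)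
  also have "\<dots> = card UU * (2 ^ (k * k)) ^ r" by simp
  also have "\<dots> \<le> (k + 1) * n ^ k * (2 ^ (k * k)) ^ r"
    using card_small_subsets[OF n, of k] unfolding UU_def by (intro mult_right_mono) auto
  finally show ?thesis .
qed

lemma V2:
  assumes E1: "E1 \<in> I3 n" and E2: "E2 \<in> I3 n" and ne: "E1 \<inter> E2 \<noteq> {}"
  shows "card (vtx E1 \<union> vtx E2) \<le> 4"
proof -
  obtain g where g: "g \<in> E1" "g \<in> E2" using ne by blast
  have "g \<subseteq> vtx E1 \<inter> vtx E2" "card g = 2" using I3_edge[OF E1 g(1)] I3_edge[OF E2 g(2)] by auto
  then have "2 \<le> card (vtx E1 \<inter> vtx E2)"
    using card_mono[of "vtx E1 \<inter> vtx E2" g] I3_fin_vtx[OF E1] by auto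
  moreover have "card (vtx E1) + card (vtx E2) = card (vtx E1 \<union> vtx E2) + card (vtx E1 \<inter> vtx E2)"
    by (rule card_Un_Int[OF I3_fin_vtx[OF E1] I3_fin_vtx[OF E2]])
  ultimately show ?thesis using I3_card_vtx[OF E1] I3_card_vtx[OF E2] by linarith
qed

lemma V4_aux:
  assumes E1: "E1 \<in> I3 n" and E2: "E2 \<in> I3 n" and E3: "E3 \<in> I3 n" and E4: "E4 \<in> I3 n"
    and ne34: "E3 \<inter> E4 \<noteq> {}" and g0: "g0 \<in> E1" "g0 \<in> E3 \<union> E4"
    and mult: "\<And>g. cnt [E1, E2, E3, E4] g \<noteq> 1"
  shows "card (vtx E1 \<union> vtx E2 \<union> vtx E3 \<union> vtx E4) \<le> 5"
proof -
  let ?V = "vtx E3 \<union> vtx E4"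
  have e34: "g \<subseteq> ?V" if "g \<in> E3 \<union> E4" for g
    using that I3_edge[OF E3] I3_edge[OF E4] by blast
  have d1: "x \<in> ?V" if x1: "x \<in> vtx E1" and x2: "x \<notin> vtx E2" for x
  proof -
    obtain g where g: "g \<in> E1" "x \<in> g" using I3_vtx_edge[OF E1 x1] by blast
    have "g \<notin> E2" using g x2 I3_edge[OF E2] by blast
    then have "g \<in> E3 \<union> E4" using mult[of g] g(1) by (auto split: if_splits)
    then show ?thesis using e34 g(2) by blast
  qed
  have d2: "x \<in> ?V" if x1: "x \<in> vtx E2" and x2: "x \<notin> vtx E1" for x
  proof -
    obtain g where g: "g \<in> E2" "x \<in> g" using I3_vtx_edge[OF E2 x1] by blast
    have "g \<notin> E1" using g x2 I3_edge[OF E1] by blast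
    then have "g \<in> E3 \<union> E4" using mult[of g] g(1) by (auto split: if_splits)
    then show ?thesis using e34 g(2) by blast
  qed
  have g0V: "g0 \<subseteq> ?V" using e34 g0(2) by blast
  have sub: "vtx E1 \<union> vtx E2 \<union> vtx E3 \<union> vtx E4 \<subseteq> ?V \<union> (vtx E1 - g0)"
    using d1 d2 g0V by blast
  have fV: "finite ?V" using I3_fin_vtx[OF E3] I3_fin_vtx[OF E4] by simp
  have f1: "finite (vtx E1 - g0)" using I3_fin_vtx[OF E1] by simp
  have "card (vtx E1 - g0) = card (vtx E1) - card g0"
    using I3_edge[OF E1 g0(1)] I3_fin_vtx[OF E1] by (intro card_Diff_subset) (auto intro: finite_subset)
  then have c1: "card (vtx E1 - g0) = 1" using I3_card_vtx[OF E1] I3_edge[OF E1 g0(1)] by simp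
  have "card (vtx E1 \<union> vtx E2 \<union> vtx E3 \<union> vtx E4) \<le> card (?V \<union> (vtx E1 - g0))"
    by (rule card_mono[OF _ sub]) (use fV f1 in simp)
  also have "\<dots> \<le> card ?V + card (vtx E1 - g0)" by (rule card_Un_le)
  also have "\<dots> \<le> 4 + 1" using V2[OF E3 E4 ne34] c1 by simp
  finally show ?thesis by simp
qed

lemma V4:
  assumes E1: "E1 \<in> I3 n" and E2: "E2 \<in> I3 n" and E3: "E3 \<in> I3 n" and E4: "E4 \<in> I3 n"
    and ne34: "E3 \<inter> E4 \<noteq> {}" and cross: "(E1 \<union> E2) \<inter> (E3 \<union> E4) \<noteq> {}"
    and mult: "\<And>g. cnt [E1, E2, E3, E4] g \<noteq> 1"
  shows "card (vtx E1 \<union> vtx E2 \<union> vtx E3 \<union> vtx E4) \<le> 5"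
proof -
  obtain g0 where g0: "g0 \<in> E1 \<union> E2" "g0 \<in> E3 \<union> E4" using cross by blast
  show ?thesis
  proof (cases "g0 \<in> E1")
    case True
    then show ?thesis by (rule V4_aux[OF E1 E2 E3 E4 ne34 _ g0(2) mult])
  next
    case False
    then have "g0 \<in> E2" using g0 by blast
    have mult': "cnt [E2, E1, E3, E4] g \<noteq> 1" for g using mult[of g] by (simp add: add_ac)
    have "card (vtx E2 \<union> vtx E1 \<union> vtx E3 \<union> vtx E4) \<le> 5"
      by (rule V4_aux[OF E2 E1 E3 E4 ne34 \<open>g0 \<in> E2\<close> g0(2) mult'])
    then show ?thesis by (simp add: Un_commute Un_left_commute)
  qed
qed


lemma chiS_upd: "e \<notin> S \<Longrightarrow> chiS p S (x(e := b)) = chiS p S x"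
  unfolding chiS_def chi_def by (rule prod.cong) auto

lemma chiS_remove: "finite S \<Longrightarrow> e \<in> S \<Longrightarrow> chiS p S x = chi p x e * chiS p (S - {e}) x"
  unfolding chiS_def by (rule prod.remove)

context
  fixes p :: real and n :: nat and c :: "nat set set \<Rightarrow> real"
  assumes p0: "0 < p" and p1: "p < 1"
begin

lemma EW0: "EG n p (\<lambda>x. \<Sum>E\<in>I3 n. c E * chiS p E x) = 0"
proof -
  have "EG n p (\<lambda>x. \<Sum>E\<in>I3 n. c E * chiS p E x) = (\<Sum>E\<in>I3 n. EG n p (\<lambda>x. c E * chiS p E x))"
    by (rule Bochner_Integration.integral_sum) simp
  also have "\<dots> = (\<Sum>E\<in>I3 n. c E * EG n p (chiS p E))" by simp
  also have "\<dots> = 0"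
    by (rule sum.neutral) (auto simp: E_chiS_zero[OF p0 p1] I3_sub I3_nonempty)
  finally show ?thesis .
qed

lemma EW2: "EG n p (\<lambda>x. (\<Sum>E\<in>I3 n. c E * chiS p E x)\<^sup>2) = (\<Sum>E\<in>I3 n. (c E)\<^sup>2)"
proof -
  have "EG n p (\<lambda>x. (\<Sum>E\<in>I3 n. c E * chiS p E x)\<^sup>2) =
      EG n p (\<lambda>x. \<Sum>E\<in>I3 n. \<Sum>E'\<in>I3 n. (c E * c E') * (chiS p E x * chiS p E' x))"
    by (simp add: power2_eq_square sum_product mult_ac)
  also have "\<dots> = (\<Sum>E\<in>I3 n. \<Sum>E'\<in>I3 n. (c E * c E') * EG n p (\<lambda>x. chiS p E x * chiS p E' x))"
    by (simp add: Bochner_Integration.integral_sum)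
  also have "\<dots> = (\<Sum>E\<in>I3 n. \<Sum>E'\<in>I3 n. if E = E' then (c E)\<^sup>2 else 0)"
    by (intro sum.cong refl) (auto simp: E_orth[OF p0 p1] I3_sub power2_eq_square)
  also have "\<dots> = (\<Sum>E\<in>I3 n. (c E)\<^sup>2)" by (simp add: finite_I3)
  finally show ?thesis .
qed

lemma varW: "measure_pmf.variance (Gnp n p) (\<lambda>x. \<Sum>E\<in>I3 n. c E * chiS p E x) = (\<Sum>E\<in>I3 n. (c E)\<^sup>2)"
  using EW0 EW2 by simp

definition NE :: "nat set set \<Rightarrow> nat set set set" where "NE E = {E'\<in>I3 n. E' \<inter> E \<noteq> {}}"

lemma NE_sub: "NE E \<subseteq> I3 n" unfolding NE_def by auto

lemma indep_I3:
  fixes s :: real and G :: "real \<Rightarrow> real"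
  assumes E: "E \<in> I3 n"
  shows "EG n p (\<lambda>x. (c E / s * chiS p E x) *
     G ((\<Sum>j\<in>I3 n. c j / s * chiS p j x) - (\<Sum>j\<in>NE E. c j / s * chiS p j x))) = 0"
proof -
  obtain e where e: "e \<in> E" using I3_nonempty[OF E] by blast
  have eK: "e \<in> Kedges n" using e I3_sub[OF E] by auto
  define F where "F x = c E / s * chiS p (E - {e}) x * G (\<Sum>j\<in>I3 n - NE E. c j / s * chiS p j x)" for x
  have eq: "(c E / s * chiS p E x) * G ((\<Sum>j\<in>I3 n. c j / s * chiS p j x) - (\<Sum>j\<in>NE E. c j / s * chiS p j x))
      = chi p x e * F x" for x
  proof -
    have "(\<Sum>j\<in>I3 n. c j / s * chiS p j x) - (\<Sum>j\<in>NE E. c j / s * chiS p j x) = (\<Sum>j\<in>I3 n - NE E. c j / s * chiS p j x)"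
      by (simp add: sum_diff[OF finite_I3 NE_sub])
    then show ?thesis unfolding F_def using chiS_remove[OF I3_finite[OF E] e, of p x] by simp
  qed
  have indep: "F (x(e := b)) = F x" for x b
  proof -
    have "chiS p j (x(e := b)) = chiS p j x" if "j \<in> I3 n - NE E" for j
      using that e unfolding NE_def by (intro chiS_upd) auto
    then have "(\<Sum>j\<in>I3 n - NE E. c j / s * chiS p j (x(e := b))) = (\<Sum>j\<in>I3 n - NE E. c j / s * chiS p j x)"
      by (intro sum.cong) auto
    moreover have "chiS p (E - {e}) (x(e := b)) = chiS p (E - {e}) x" by (rule chiS_upd) simp
    ultimately show ?thesis unfolding F_def by simp
  qed
  show ?thesis unfolding eq by (rule E_chi_factor[OF p0 p1 eK indep])
qed

lemma stein_I3:
  fixes s :: real and h :: "real \<Rightarrow> real"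
  assumes lip: "1-lipschitz_on UNIV h"
  shows "\<bar>EG n p (\<lambda>x. h ((\<Sum>E\<in>I3 n. c E * chiS p E x) / s)) - (\<integral>z. h z \<partial>std_normal)\<bar>
    \<le> 14 * (\<Sum>E\<in>I3 n. EG n p (\<lambda>x. \<bar>c E / s * chiS p E x\<bar> * (\<Sum>j\<in>NE E. c j / s * chiS p j x)\<^sup>2))
      + 2 * EG n p (\<lambda>x. \<bar>1 - (\<Sum>E\<in>I3 n. (c E / s * chiS p E x) * (\<Sum>j\<in>NE E. c j / s * chiS p j x))\<bar>)"
proof -
  obtain f f' where f: "\<forall>w. (f has_real_derivative f' w) (at w)"
    "\<forall>w. f' w - w * f w = h w - (\<integral>z. h z \<partial>std_normal)"
    "\<forall>w. \<bar>f' w\<bar> \<le> 2" "\<forall>x y. \<bar>f' x - f' y\<bar> \<le> 14 * \<bar>x - y\<bar>"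
    using stein_solution[OF lip] by blast
  define X where "X E x = c E / s * chiS p E x" for E x
  have Wdiv: "(\<Sum>E\<in>I3 n. c E * chiS p E x) / s = (\<Sum>E\<in>I3 n. X E x)" for x
    unfolding X_def by (simp add: sum_divide_distrib)
  have "EG n p (\<lambda>x. h ((\<Sum>E\<in>I3 n. c E * chiS p E x) / s)) - (\<integral>z. h z \<partial>std_normal)
      = EG n p (\<lambda>x. h (\<Sum>E\<in>I3 n. X E x) - (\<integral>z. h z \<partial>std_normal))"
    by (simp add: Wdiv Bochner_Integration.integral_diff prob_space_measure_pmf prob_space.prob_space)
  also have "\<dots> = EG n p (\<lambda>x. f' (\<Sum>E\<in>I3 n. X E x) - (\<Sum>E\<in>I3 n. X E x) * f (\<Sum>E\<in>I3 n. X E x))"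
    using f(2) by metis
  finally have eq: "EG n p (\<lambda>x. h ((\<Sum>E\<in>I3 n. c E * chiS p E x) / s)) - (\<integral>z. h z \<partial>std_normal) = \<dots>" .
  have "\<bar>EG n p (\<lambda>x. f' (\<Sum>E\<in>I3 n. X E x) - (\<Sum>E\<in>I3 n. X E x) * f (\<Sum>E\<in>I3 n. X E x))\<bar>
    \<le> 14 * (\<Sum>i\<in>I3 n. EG n p (\<lambda>x. \<bar>X i x\<bar> * (\<Sum>j\<in>NE i. X j x)\<^sup>2))
      + 2 * EG n p (\<lambda>x. \<bar>1 - (\<Sum>i\<in>I3 n. X i x * (\<Sum>j\<in>NE i. X j x))\<bar>)"
  proof (rule stein_local[OF finite_set_Gnp])
    show "EG n p (\<lambda>x. X i x * G ((\<Sum>j\<in>I3 n. X j x) - (\<Sum>j\<in>NE i. X j x))) = 0" if "i \<in> I3 n" for i G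
      unfolding X_def by (rule indep_I3[OF that])
  qed (use f in auto)
  then show ?thesis unfolding eq X_def .
qed

end


lemma E_abs_sqrt:
  fixes M :: "'a pmf" and Y :: "'a \<Rightarrow> real"
  assumes "finite (set_pmf M)"
  shows "measure_pmf.expectation M (\<lambda>x. \<bar>Y x\<bar>) \<le> sqrt (measure_pmf.expectation M (\<lambda>x. (Y x)\<^sup>2))"
proof -
  have int: "integrable (measure_pmf M) (F :: 'a \<Rightarrow> real)" for F by (rule integrable_measure_pmf_finite[OF assms])
  have "0 \<le> measure_pmf.variance M (\<lambda>x. \<bar>Y x\<bar>)" by (intro integral_nonneg_AE) auto
  also have "measure_pmf.variance M (\<lambda>x. \<bar>Y x\<bar>) = measure_pmf.expectation M (\<lambda>x. (Y x)\<^sup>2) - (measure_pmf.expectation M (\<lambda>x. \<bar>Y x\<bar>))\<^sup>2"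
    by (subst measure_pmf.variance_eq) (auto intro: int)
  finally have "(measure_pmf.expectation M (\<lambda>x. \<bar>Y x\<bar>))\<^sup>2 \<le> measure_pmf.expectation M (\<lambda>x. (Y x)\<^sup>2)" by simp
  then show ?thesis by (rule real_le_rsqrt)
qed

context
  fixes p :: real and n :: nat and c :: "nat set set \<Rightarrow> real"
  assumes p0: "0 < p" and p1: "p < 1"
begin

lemma EWJ2: "J \<subseteq> I3 n \<Longrightarrow> EG n p (\<lambda>x. (\<Sum>E\<in>J. a E * chiS p E x)\<^sup>2) = (\<Sum>E\<in>J. (a E)\<^sup>2)"
proof -
  assume J: "J \<subseteq> I3 n"
  have fJ: "finite J" using J finite_I3 by (rule finite_subset)
  have "EG n p (\<lambda>x. (\<Sum>E\<in>J. a E * chiS p E x)\<^sup>2) =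
      EG n p (\<lambda>x. \<Sum>E\<in>J. \<Sum>E'\<in>J. (a E * a E') * (chiS p E x * chiS p E' x))"
    by (simp add: power2_eq_square sum_product mult_ac)
  also have "\<dots> = (\<Sum>E\<in>J. \<Sum>E'\<in>J. (a E * a E') * EG n p (\<lambda>x. chiS p E x * chiS p E' x))"
    by (simp add: Bochner_Integration.integral_sum)
  also have "\<dots> = (\<Sum>E\<in>J. \<Sum>E'\<in>J. if E = E' then (a E)\<^sup>2 else 0)"
  proof -
    have o: "EG n p (\<lambda>x. chiS p E x * chiS p E' x) = (if E = E' then 1 else 0)" if "E \<in> J" "E' \<in> J" for E E'
      using that J by (intro E_orth[OF p0 p1]; meson I3_sub subsetD)
    show ?thesis by (intro sum.cong refl) (simp add: o power2_eq_square)
  qed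
  also have "\<dots> = (\<Sum>E\<in>J. (a E)\<^sup>2)" by (simp add: fJ)
  finally show ?thesis .
qed

lemma card_NE_sum:
  assumes n: "1 \<le> n"
  shows "(\<Sum>E\<in>I3 n. real (card (NE n E))) \<le> 5 * real n ^ 4 * 2 ^ 32"
proof -
  have fin: "finite (NE n E)" for E using finite_subset[OF NE_sub[OF p0 p1] finite_I3] .
  have "(\<Sum>E\<in>I3 n. card (NE n E)) = card (Sigma (I3 n) (NE n))"
    by (rule card_SigmaI[symmetric]) (auto simp: finite_I3 fin)
  also have "\<dots> = card ((\<lambda>(E, E'). [E, E']) ` Sigma (I3 n) (NE n))"
    by (rule card_image[symmetric]) (auto simp: inj_on_def)
  also have "\<dots> \<le> (4 + 1) * n ^ 4 * (2 ^ (4 * 4)) ^ 2"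
  proof (rule count_lists[OF n])
    fix xs assume "xs \<in> (\<lambda>(E, E'). [E, E']) ` Sigma (I3 n) (NE n)"
    then obtain E E' where EE: "xs = [E, E']" "E \<in> I3 n" "E' \<in> NE n E" by auto
    then have E': "E' \<in> I3 n" "E \<inter> E' \<noteq> {}" unfolding NE_def[OF p0 p1] by auto
    show "length xs = 2 \<and> set xs \<subseteq> I3 n \<and> card (\<Union>E\<in>set xs. vtx E) \<le> 4"
      using EE E' V2[OF EE(2) E'(1) E'(2)] by auto
  qed
  finally have "real (\<Sum>E\<in>I3 n. card (NE n E)) \<le> real ((4 + 1) * n ^ 4 * (2 ^ (4 * 4)) ^ 2)" by linarith
  then show ?thesis by (simp add: power_mult[symmetric])
qed

lemma S1_bound:
  assumes n: "1 \<le> n" and cb: "\<And>E. E \<in> I3 n \<Longrightarrow> \<bar>c E\<bar> \<le> c0" and s: "0 < s" and c0: "0 \<le> c0"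
  shows "(\<Sum>E\<in>I3 n. EG n p (\<lambda>x. \<bar>c E / s * chiS p E x\<bar> * (\<Sum>j\<in>NE n E. c j / s * chiS p j x)\<^sup>2))
    \<le> c0 ^ 3 * Kc p ^ 3 / s ^ 3 * (5 * real n ^ 4 * 2 ^ 32)"
proof -
  have K1: "1 \<le> Kc p" by (rule Kc_ge1[OF p0 p1])
  have c00: "0 \<le> c0" if "E \<in> I3 n" for E using cb[OF that] by linarith
  have each: "EG n p (\<lambda>x. \<bar>c E / s * chiS p E x\<bar> * (\<Sum>j\<in>NE n E. c j / s * chiS p j x)\<^sup>2)
      \<le> c0 ^ 3 * Kc p ^ 3 / s ^ 3 * real (card (NE n E))" if E: "E \<in> I3 n" for E
  proof -
    have pw: "\<bar>c E / s * chiS p E x\<bar> \<le> c0 * Kc p ^ 3 / s" for x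
    proof -
      have "\<bar>chiS p E x\<bar> \<le> Kc p ^ card E" by (rule chiS_bound[OF p0 p1 I3_finite[OF E]])
      also have "\<dots> \<le> Kc p ^ 3" using K1 I3_card[OF E] by (intro power_increasing) auto
      finally have a: "\<bar>chiS p E x\<bar> \<le> Kc p ^ 3" .
      have "\<bar>c E / s * chiS p E x\<bar> = \<bar>c E\<bar> * \<bar>chiS p E x\<bar> / s" using s by (simp add: abs_mult)
      also have "\<dots> \<le> c0 * Kc p ^ 3 / s"
        using s cb[OF E] a by (intro divide_right_mono mult_mono) auto
      finally show ?thesis .
    qed
    have "EG n p (\<lambda>x. \<bar>c E / s * chiS p E x\<bar> * (\<Sum>j\<in>NE n E. c j / s * chiS p j x)\<^sup>2)
        \<le> EG n p (\<lambda>x. c0 * Kc p ^ 3 / s * (\<Sum>j\<in>NE n E. c j / s * chiS p j x)\<^sup>2)"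
      by (intro integral_mono int_Gnp mult_right_mono pw) simp
    also have "\<dots> = c0 * Kc p ^ 3 / s * EG n p (\<lambda>x. (\<Sum>j\<in>NE n E. c j / s * chiS p j x)\<^sup>2)"
      by simp
    also have "EG n p (\<lambda>x. (\<Sum>j\<in>NE n E. c j / s * chiS p j x)\<^sup>2) = (\<Sum>j\<in>NE n E. (c j / s)\<^sup>2)"
      by (rule EWJ2[OF NE_sub[OF p0 p1]])
    also have "(\<Sum>j\<in>NE n E. (c j / s)\<^sup>2) \<le> (\<Sum>j\<in>NE n E. (c0 / s)\<^sup>2)"
    proof (rule sum_mono)
      fix j assume "j \<in> NE n E"
      then have j: "j \<in> I3 n" using NE_sub[OF p0 p1] by auto
      have "\<bar>c j / s\<bar> \<le> c0 / s" using cb[OF j] s by (simp add: divide_right_mono)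
      then have "\<bar>c j / s\<bar> \<le> \<bar>c0 / s\<bar>" by linarith
      then show "(c j / s)\<^sup>2 \<le> (c0 / s)\<^sup>2" by (metis abs_le_square_iff)
    qed
    then have "c0 * Kc p ^ 3 / s * (\<Sum>j\<in>NE n E. (c j / s)\<^sup>2) \<le> c0 * Kc p ^ 3 / s * (\<Sum>j\<in>NE n E. (c0 / s)\<^sup>2)"
      using c00[OF E] s K1 by (intro mult_left_mono) auto
    also have "\<dots> = c0 ^ 3 * Kc p ^ 3 / s ^ 3 * real (card (NE n E))"
      by (simp add: power2_eq_square power3_eq_cube field_simps)
    finally show ?thesis .
  qed
  have "(\<Sum>E\<in>I3 n. EG n p (\<lambda>x. \<bar>c E / s * chiS p E x\<bar> * (\<Sum>j\<in>NE n E. c j / s * chiS p j x)\<^sup>2))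
      \<le> (\<Sum>E\<in>I3 n. c0 ^ 3 * Kc p ^ 3 / s ^ 3 * real (card (NE n E)))"
    by (rule sum_mono) (rule each)
  also have "\<dots> = c0 ^ 3 * Kc p ^ 3 / s ^ 3 * (\<Sum>E\<in>I3 n. real (card (NE n E)))"
    by (simp add: sum_distrib_left)
  also have "\<dots> \<le> c0 ^ 3 * Kc p ^ 3 / s ^ 3 * (5 * real n ^ 4 * 2 ^ 32)"
    using c0 s K1 card_NE_sum[OF n] by (intro mult_left_mono) auto
  finally show ?thesis .
qed

end


definition Lq :: "nat set set \<times> nat set set \<Rightarrow> nat set set list" where "Lq q = [fst q, snd q]"

lemma chiL_append: "chiL p (Ss @ Ts) x = chiL p Ss x * chiL p Ts x"
  by (simp add: chiL_def)

lemma chiL_Lq: "chiL p (Lq q) x = chiS p (fst q) x * chiS p (snd q) x"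
  by (simp add: chiL_def Lq_def)

lemma sum_Sigma':
  assumes "finite A" "\<forall>x\<in>A. finite (B x)"
  shows "(\<Sum>x\<in>A. \<Sum>y\<in>B x. F (x, y)) = (\<Sum>q\<in>Sigma A B. F q)"
proof -
  have "(\<Sum>x\<in>A. \<Sum>y\<in>B x. F (x, y)) = (\<Sum>(x, y)\<in>Sigma A B. F (x, y))"
    by (rule sum.Sigma[OF assms])
  then show ?thesis by (simp add: case_prod_beta')
qed

context
  fixes p :: real and n :: nat and c :: "nat set set \<Rightarrow> real" and s :: real
  assumes p0: "0 < p" and p1: "p < 1"
begin

definition PP :: "(nat set set \<times> nat set set) set" where "PP = Sigma (I3 n) (NE n)"
definition aq :: "nat set set \<times> nat set set \<Rightarrow> real" where "aq q = c (fst q) / s * (c (snd q) / s)"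
definition DD :: "nat set set \<times> nat set set \<Rightarrow> nat set set \<times> nat set set \<Rightarrow> real" where
  "DD q q' = EG n p (chiL p (Lq q @ Lq q')) - EG n p (chiL p (Lq q)) * EG n p (chiL p (Lq q'))"
definition Good :: "((nat set set \<times> nat set set) \<times> (nat set set \<times> nat set set)) set" where
  "Good = {(q, q') \<in> PP \<times> PP. (fst q \<union> snd q) \<inter> (fst q' \<union> snd q') \<noteq> {} \<and> (\<forall>g. cnt (Lq q @ Lq q') g \<noteq> 1)}"

lemma finite_PP: "finite PP"
  unfolding PP_def by (intro finite_SigmaI finite_I3) (meson NE_sub[OF p0 p1] finite_I3 finite_subset)

lemma finite_NE: "finite (NE n E)"
  by (meson NE_sub[OF p0 p1] finite_I3 finite_subset)

lemma PP_mem: "q \<in> PP \<Longrightarrow> fst q \<in> I3 n \<and> snd q \<in> I3 n \<and> snd q \<inter> fst q \<noteq> {}"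
  unfolding PP_def NE_def[OF p0 p1] by auto

lemma T_eq: "(\<Sum>E\<in>I3 n. (c E / s * chiS p E x) * (\<Sum>j\<in>NE n E. c j / s * chiS p j x))
  = (\<Sum>q\<in>PP. aq q * chiL p (Lq q) x)"
proof -
  have "(\<Sum>E\<in>I3 n. (c E / s * chiS p E x) * (\<Sum>j\<in>NE n E. c j / s * chiS p j x))
      = (\<Sum>E\<in>I3 n. \<Sum>j\<in>NE n E. aq (E, j) * chiL p (Lq (E, j)) x)"
    by (simp add: sum_distrib_left aq_def chiL_Lq mult_ac)
  also have "\<dots> = (\<Sum>q\<in>PP. aq q * chiL p (Lq q) x)"
    unfolding PP_def by (rule sum_Sigma') (auto simp: finite_I3 finite_NE)
  finally show ?thesis .
qed

lemma ET:
  assumes s: "0 < s" and s2: "s\<^sup>2 = (\<Sum>E\<in>I3 n. (c E)\<^sup>2)"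
  shows "EG n p (\<lambda>x. \<Sum>q\<in>PP. aq q * chiL p (Lq q) x) = 1"
proof -
  have "EG n p (\<lambda>x. \<Sum>q\<in>PP. aq q * chiL p (Lq q) x) = (\<Sum>q\<in>PP. aq q * EG n p (chiL p (Lq q)))"
    by (simp add: Bochner_Integration.integral_sum)
  also have "\<dots> = (\<Sum>q\<in>PP. if fst q = snd q then aq q else 0)"
  proof (rule sum.cong)
    fix q assume q: "q \<in> PP"
    have "chiL p (Lq q) = (\<lambda>x. chiS p (fst q) x * chiS p (snd q) x)"
      by (rule ext) (simp add: chiL_Lq)
    then have "EG n p (chiL p (Lq q)) = EG n p (\<lambda>x. chiS p (fst q) x * chiS p (snd q) x)"
      by simp
    also have "\<dots> = (if fst q = snd q then 1 else 0)"
      using PP_mem[OF q] I3_sub by (intro E_orth[OF p0 p1]) auto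
    finally show "aq q * EG n p (chiL p (Lq q)) = (if fst q = snd q then aq q else 0)" by simp
  qed simp
  also have "\<dots> = (\<Sum>E\<in>I3 n. \<Sum>j\<in>NE n E. if E = j then aq (E, j) else 0)"
    unfolding PP_def by (rule sum_Sigma'[symmetric, where F="\<lambda>q. if fst q = snd q then aq q else 0", simplified]) (auto simp: finite_I3 finite_NE)
  also have "\<dots> = (\<Sum>E\<in>I3 n. aq (E, E))"
  proof (rule sum.cong)
    fix E assume E: "E \<in> I3 n"
    have "E \<in> NE n E" using E I3_nonempty[OF E] unfolding NE_def[OF p0 p1] by auto
    moreover have "finite (NE n E)" by (rule finite_NE)
    ultimately show "(\<Sum>j\<in>NE n E. if E = j then aq (E, j) else 0) = aq (E, E)"
      by (simp add: sum.delta)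
  qed simp
  also have "\<dots> = (\<Sum>E\<in>I3 n. (c E)\<^sup>2) / s\<^sup>2"
    by (simp add: aq_def sum_divide_distrib power2_eq_square)
  also have "\<dots> = 1" using s unfolding s2[symmetric] by simp
  finally show ?thesis .
qed

lemma DD_zero:
  assumes q: "q \<in> PP" and q': "q' \<in> PP" and ng: "(q, q') \<notin> Good"
  shows "DD q q' = 0"
proof -
  have sub: "\<forall>S\<in>set (Lq q). S \<subseteq> Kedges n" "\<forall>S\<in>set (Lq q'). S \<subseteq> Kedges n"
    using PP_mem[OF q] PP_mem[OF q'] I3_sub unfolding Lq_def by auto
  have sub2: "\<forall>S\<in>set (Lq q @ Lq q'). S \<subseteq> Kedges n" using sub by auto
  show ?thesis
  proof (cases "(fst q \<union> snd q) \<inter> (fst q' \<union> snd q') = {}")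
    case True
    have "EG n p (chiL p (Lq q @ Lq q')) = EG n p (chiL p (Lq q)) * EG n p (chiL p (Lq q'))"
      by (rule E_chiL_split[OF p0 p1 sub]) (use True in \<open>simp add: Lq_def\<close>)
    then show ?thesis unfolding DD_def by simp
  next
    case False
    then obtain g where g: "cnt (Lq q @ Lq q') g = 1" using ng q q' unfolding Good_def by auto
    have z1: "EG n p (chiL p (Lq q @ Lq q')) = 0" by (rule E_chiL_zero[OF p0 p1 sub2 g])
    have "cnt (Lq q) g = 1 \<or> cnt (Lq q') g = 1" using g by (simp only: cnt_append) arith
    then have "EG n p (chiL p (Lq q)) = 0 \<or> EG n p (chiL p (Lq q')) = 0"
      using E_chiL_zero[OF p0 p1 sub(1)] E_chiL_zero[OF p0 p1 sub(2)] by blast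
    then show ?thesis unfolding DD_def using z1 by auto
  qed
qed

lemma DD_bound: "q \<in> PP \<Longrightarrow> q' \<in> PP \<Longrightarrow> \<bar>DD q q'\<bar> \<le> 2 * Kc p ^ 12"
proof -
  assume q: "q \<in> PP" and q': "q' \<in> PP"
  have cs: "\<forall>S\<in>set (Lq q). finite S \<and> card S \<le> 3" "\<forall>S\<in>set (Lq q'). finite S \<and> card S \<le> 3"
    using PP_mem[OF q] PP_mem[OF q'] I3_finite I3_card unfolding Lq_def by auto
  then have cs2: "\<forall>S\<in>set (Lq q @ Lq q'). finite S \<and> card S \<le> 3" by auto
  have K1: "1 \<le> Kc p" by (rule Kc_ge1[OF p0 p1])
  have bnd: "\<bar>EG n p (chiL p Ss)\<bar> \<le> Kc p ^ (3 * length Ss)" if "\<forall>S\<in>set Ss. finite S \<and> card S \<le> 3" for Ss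
  proof -
    have "\<bar>EG n p (chiL p Ss)\<bar> \<le> EG n p (\<lambda>x. \<bar>chiL p Ss x\<bar>)" by (rule integral_abs_bound)
    also have "\<dots> \<le> EG n p (\<lambda>x. Kc p ^ (3 * length Ss))"
      by (intro integral_mono int_Gnp chiL_bound[OF p0 p1 that])
    also have "\<dots> = Kc p ^ (3 * length Ss)" by simp
    finally show ?thesis .
  qed
  have b4: "\<bar>EG n p (chiL p (Lq q @ Lq q'))\<bar> \<le> Kc p ^ 12" using bnd[OF cs2] by (simp add: Lq_def)
  have b2: "\<bar>EG n p (chiL p (Lq q))\<bar> \<le> Kc p ^ 6" "\<bar>EG n p (chiL p (Lq q'))\<bar> \<le> Kc p ^ 6"
    using bnd[OF cs(1)] bnd[OF cs(2)] by (simp_all add: Lq_def)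
  have "\<bar>EG n p (chiL p (Lq q)) * EG n p (chiL p (Lq q'))\<bar> \<le> Kc p ^ 6 * Kc p ^ 6"
    unfolding abs_mult by (rule mult_mono[OF b2]) auto
  also have "\<dots> = Kc p ^ 12" by (simp add: power_add[symmetric])
  finally have "\<bar>EG n p (chiL p (Lq q)) * EG n p (chiL p (Lq q'))\<bar> \<le> Kc p ^ 12" .
  then show ?thesis unfolding DD_def using b4 by linarith
qed

lemma card_Good:
  assumes n: "1 \<le> n"
  shows "real (card Good) \<le> 6 * real n ^ 5 * 2 ^ 100"
proof -
  define mk where "mk = (\<lambda>((E1, E2), (E3, E4)). [E1, E2, E3, E4 :: nat set set])"
  have inj: "inj_on mk Good" unfolding mk_def by (auto simp: inj_on_def)
  have "card Good = card (mk ` Good)" by (rule card_image[symmetric, OF inj])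
  also have "\<dots> \<le> (5 + 1) * n ^ 5 * (2 ^ (5 * 5)) ^ 4"
  proof (rule count_lists[OF n])
    fix xs assume "xs \<in> mk ` Good"
    then obtain E1 E2 E3 E4 where x: "xs = [E1, E2, E3, E4]" "((E1, E2), (E3, E4)) \<in> Good"
      unfolding mk_def by auto
    have m: "(E1, E2) \<in> PP" "(E3, E4) \<in> PP" using x(2) unfolding Good_def by auto
    have I: "E1 \<in> I3 n" "E2 \<in> I3 n" "E3 \<in> I3 n" "E4 \<in> I3 n" "E4 \<inter> E3 \<noteq> {}"
      using PP_mem[OF m(1)] PP_mem[OF m(2)] by auto
    have cr: "(E1 \<union> E2) \<inter> (E3 \<union> E4) \<noteq> {}" and mu: "\<And>g. cnt [E1, E2, E3, E4] g \<noteq> 1"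
      using x(2) unfolding Good_def Lq_def by auto
    have "card (vtx E1 \<union> vtx E2 \<union> vtx E3 \<union> vtx E4) \<le> 5"
      by (rule V4[OF I(1-4) _ cr mu]) (use I(5) in blast)
    then show "length xs = 4 \<and> set xs \<subseteq> I3 n \<and> card (\<Union>E\<in>set xs. vtx E) \<le> 5"
      using x(1) I by (simp add: Un_assoc)
  qed
  finally have "real (card Good) \<le> real ((5 + 1) * n ^ 5 * (2 ^ (5 * 5)) ^ 4)" by linarith
  then show ?thesis by (simp add: power_mult[symmetric])
qed

end


context
  fixes p :: real and n :: nat and c :: "nat set set \<Rightarrow> real" and s :: real
  assumes p0: "0 < p" and p1: "p < 1"
begin

lemma S2_bound:
  assumes n: "1 \<le> n" and cb: "\<And>E. E \<in> I3 n \<Longrightarrow> \<bar>c E\<bar> \<le> c0" and c0: "0 \<le> c0"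
    and s: "0 < s" and s2: "s\<^sup>2 = (\<Sum>E\<in>I3 n. (c E)\<^sup>2)"
  shows "EG n p (\<lambda>x. \<bar>1 - (\<Sum>E\<in>I3 n. (c E / s * chiS p E x) * (\<Sum>j\<in>NE n E. c j / s * chiS p j x))\<bar>)
    \<le> sqrt (6 * real n ^ 5 * 2 ^ 100 * (2 * Kc p ^ 12)) * (c0 / s)\<^sup>2"
proof -
  let ?Y = "\<lambda>q. chiL p (Lq q)"
  let ?a = "aq c s"
  let ?PP = "PP n"
  define T where "T x = (\<Sum>q\<in>?PP. ?a q * ?Y q x)" for x
  have Teq: "(\<Sum>E\<in>I3 n. (c E / s * chiS p E x) * (\<Sum>j\<in>NE n E. c j / s * chiS p j x)) = T x" for x
    unfolding T_def by (rule T_eq[OF p0 p1])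
  have fPP: "finite ?PP" by (rule finite_PP[OF p0 p1])
  have ET1: "EG n p T = 1" unfolding T_def by (rule ET[OF p0 p1 s s2])
  have ET_sum: "EG n p T = (\<Sum>q\<in>?PP. ?a q * EG n p (?Y q))"
    unfolding T_def by (simp add: Bochner_Integration.integral_sum)
  have ET2: "EG n p (\<lambda>x. (T x)\<^sup>2) = (\<Sum>q\<in>?PP. \<Sum>q'\<in>?PP. ?a q * ?a q' * EG n p (chiL p (Lq q @ Lq q')))"
  proof -
    have "(\<lambda>x. (T x)\<^sup>2) = (\<lambda>x. \<Sum>q\<in>?PP. \<Sum>q'\<in>?PP. ?a q * ?a q' * chiL p (Lq q @ Lq q') x)"
      unfolding T_def by (rule ext) (simp add: power2_eq_square sum_product chiL_append mult_ac)
    then show ?thesis by (simp add: Bochner_Integration.integral_sum)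
  qed
  have sq: "(EG n p T)\<^sup>2 = (\<Sum>q\<in>?PP. \<Sum>q'\<in>?PP. ?a q * ?a q' * (EG n p (?Y q) * EG n p (?Y q')))"
    unfolding ET_sum by (simp add: power2_eq_square sum_product mult_ac)
  have var: "EG n p (\<lambda>x. (1 - T x)\<^sup>2) = (\<Sum>q\<in>?PP. \<Sum>q'\<in>?PP. ?a q * ?a q' * DD p n q q')"
  proof -
    have "EG n p (\<lambda>x. (1 - T x)\<^sup>2) = EG n p (\<lambda>x. 1 - 2 * T x + (T x)\<^sup>2)"
      by (simp add: power2_eq_square algebra_simps)
    also have "\<dots> = 1 - 2 * EG n p T + EG n p (\<lambda>x. (T x)\<^sup>2)"
      by (simp add: Bochner_Integration.integral_add Bochner_Integration.integral_diff prob_space_measure_pmf prob_space.prob_space)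
    also have "\<dots> = EG n p (\<lambda>x. (T x)\<^sup>2) - (EG n p T)\<^sup>2" using ET1 by simp
    also have "\<dots> = (\<Sum>q\<in>?PP. \<Sum>q'\<in>?PP. ?a q * ?a q' * DD p n q q')"
      unfolding ET2 sq DD_def[OF p0 p1] by (simp add: sum_subtractf[symmetric] algebra_simps)
    finally show ?thesis .
  qed
  have abound: "\<bar>?a q\<bar> \<le> (c0 / s)\<^sup>2" if "q \<in> ?PP" for q
  proof -
    have m: "fst q \<in> I3 n" "snd q \<in> I3 n" using PP_mem[OF p0 p1 that] by auto
    have "\<bar>?a q\<bar> = \<bar>c (fst q)\<bar> / s * (\<bar>c (snd q)\<bar> / s)" using s by (simp add: aq_def[OF p0 p1] abs_mult)
    also have "\<dots> \<le> c0 / s * (c0 / s)"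
      using cb[OF m(1)] cb[OF m(2)] s by (intro mult_mono divide_right_mono) auto
    finally show ?thesis by (simp add: power2_eq_square)
  qed
  have "EG n p (\<lambda>x. (1 - T x)\<^sup>2) \<le> (\<Sum>q\<in>?PP. \<Sum>q'\<in>?PP. \<bar>?a q * ?a q' * DD p n q q'\<bar>)"
    unfolding var by (rule order_trans[OF abs_ge_self]) (rule order_trans[OF sum_abs sum_mono[OF sum_abs]])
  also have "\<dots> = (\<Sum>z\<in>?PP \<times> ?PP. \<bar>?a (fst z) * ?a (snd z) * DD p n (fst z) (snd z)\<bar>)"
    by (simp add: sum.cartesian_product case_prod_beta')
  also have "\<dots> = (\<Sum>z\<in>Good n. \<bar>?a (fst z) * ?a (snd z) * DD p n (fst z) (snd z)\<bar>)"
  proof (rule sum.mono_neutral_right)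
    show "finite (?PP \<times> ?PP)" using fPP by simp
    show "Good n \<subseteq> ?PP \<times> ?PP" unfolding Good_def[OF p0 p1] by auto
    show "\<forall>z\<in>?PP \<times> ?PP - Good n. \<bar>?a (fst z) * ?a (snd z) * DD p n (fst z) (snd z)\<bar> = 0"
      using DD_zero[OF p0 p1] by auto
  qed
  also have "\<dots> \<le> (\<Sum>z\<in>Good n. (c0 / s)\<^sup>2 * (c0 / s)\<^sup>2 * (2 * Kc p ^ 12))"
  proof (rule sum_mono)
    fix z assume z: "z \<in> Good n"
    then have zz: "fst z \<in> ?PP" "snd z \<in> ?PP" unfolding Good_def[OF p0 p1] by auto
    show "\<bar>?a (fst z) * ?a (snd z) * DD p n (fst z) (snd z)\<bar> \<le> (c0 / s)\<^sup>2 * (c0 / s)\<^sup>2 * (2 * Kc p ^ 12)"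
      unfolding abs_mult
      by (intro mult_mono abound zz DD_bound[OF p0 p1 zz]) auto
  qed
  also have "\<dots> = real (card (Good n)) * ((c0 / s)\<^sup>2)\<^sup>2 * (2 * Kc p ^ 12)"
    by (simp add: power2_eq_square)
  also have "\<dots> \<le> (6 * real n ^ 5 * 2 ^ 100) * ((c0 / s)\<^sup>2)\<^sup>2 * (2 * Kc p ^ 12)"
    using card_Good[OF p0 p1 n] by (intro mult_right_mono) auto
  finally have v: "EG n p (\<lambda>x. (1 - T x)\<^sup>2) \<le> (6 * real n ^ 5 * 2 ^ 100 * (2 * Kc p ^ 12)) * ((c0 / s)\<^sup>2)\<^sup>2"
    by (simp add: mult_ac)
  have "EG n p (\<lambda>x. \<bar>1 - T x\<bar>) \<le> sqrt (EG n p (\<lambda>x. (1 - T x)\<^sup>2))"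
    by (rule E_abs_sqrt[OF finite_set_Gnp])
  also have "\<dots> \<le> sqrt ((6 * real n ^ 5 * 2 ^ 100 * (2 * Kc p ^ 12)) * ((c0 / s)\<^sup>2)\<^sup>2)"
    using v by simp
  also have "\<dots> = sqrt (6 * real n ^ 5 * 2 ^ 100 * (2 * Kc p ^ 12)) * sqrt (((c0 / s)\<^sup>2)\<^sup>2)"
    by (rule real_sqrt_mult)
  also have "sqrt (((c0 / s)\<^sup>2)\<^sup>2) = (c0 / s)\<^sup>2" by (rule real_sqrt_unique) simp_all
  finally show ?thesis unfolding Teq .
qed

end


lemma final_arith:
  fixes m a lam Q K K0 \<sigma> S1 S2 CP CG :: real
  assumes m: "0 < m" and a: "0 < a" and lam: "0 < lam" and Q: "0 \<le> Q" and K: "0 \<le> K" "K \<le> K0"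
    and sig: "a * lam * m ^ 3 / 6 \<le> \<sigma>" and CP: "0 \<le> CP" and CG: "0 \<le> CG"
    and S1: "S1 \<le> (a * Q) ^ 3 * K ^ 3 / \<sigma> ^ 3 * (CP * m ^ 8)"
    and S2: "S2 \<le> sqrt (CG * m ^ 10 * (2 * K ^ 12)) * (a * Q / \<sigma>)\<^sup>2"
  shows "14 * S1 + 2 * S2 \<le> (14 * (216 * Q ^ 3 * K0 ^ 3 * CP / lam ^ 3) + 2 * (36 * sqrt (2 * CG) * K0 ^ 6 * Q\<^sup>2 / lam\<^sup>2)) / m"
proof -
  define D where "D = a * lam * m ^ 3 / 6"
  have D: "0 < D" unfolding D_def using a lam m by simp
  have sD: "D \<le> \<sigma>" using sig unfolding D_def .
  have s0: "0 < \<sigma>" using D sD by linarith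
  have K0: "0 \<le> K0" using K by linarith
  have "(a * Q) ^ 3 * K ^ 3 / \<sigma> ^ 3 * (CP * m ^ 8) \<le> (a * Q) ^ 3 * K0 ^ 3 / D ^ 3 * (CP * m ^ 8)"
  proof -
    have "K ^ 3 \<le> K0 ^ 3" using K by (intro power_mono) auto
    moreover have "D ^ 3 \<le> \<sigma> ^ 3" using D sD by (intro power_mono) auto
    ultimately have "K ^ 3 / \<sigma> ^ 3 \<le> K0 ^ 3 / D ^ 3"
      using D s0 K by (intro frac_le) auto
    then have "(a * Q) ^ 3 * (K ^ 3 / \<sigma> ^ 3) * (CP * m ^ 8) \<le> (a * Q) ^ 3 * (K0 ^ 3 / D ^ 3) * (CP * m ^ 8)"
      using a Q CP m by (intro mult_right_mono mult_left_mono) auto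
    then show ?thesis by simp
  qed
  also have "\<dots> = 216 * Q ^ 3 * K0 ^ 3 * CP / lam ^ 3 / m"
    unfolding D_def using a lam m by (simp add: field_simps power_mult_distrib) (simp add: power_def)
  finally have b1: "S1 \<le> 216 * Q ^ 3 * K0 ^ 3 * CP / lam ^ 3 / m" using S1 by linarith
  have "sqrt (CG * m ^ 10 * (2 * K ^ 12)) = sqrt (2 * CG) * m ^ 5 * K ^ 6"
  proof -
    have "CG * m ^ 10 * (2 * K ^ 12) = (2 * CG) * (m ^ 5 * K ^ 6)\<^sup>2"
      by (simp add: power2_eq_square power_mult_distrib power_add[symmetric] mult_ac)
    then have "sqrt (CG * m ^ 10 * (2 * K ^ 12)) = sqrt (2 * CG) * sqrt ((m ^ 5 * K ^ 6)\<^sup>2)"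
      by (simp only: real_sqrt_mult)
    also have "sqrt ((m ^ 5 * K ^ 6)\<^sup>2) = m ^ 5 * K ^ 6" by (rule real_sqrt_unique) (use m K in auto)
    finally show ?thesis by simp
  qed
  also have "\<dots> \<le> sqrt (2 * CG) * m ^ 5 * K0 ^ 6"
    using K m CG by (intro mult_left_mono power_mono) auto
  finally have q1: "sqrt (CG * m ^ 10 * (2 * K ^ 12)) \<le> sqrt (2 * CG) * m ^ 5 * K0 ^ 6" .
  have q2: "(a * Q / \<sigma>)\<^sup>2 \<le> (a * Q / D)\<^sup>2"
  proof -
    have "a * Q / \<sigma> \<le> a * Q / D" using a Q D sD by (intro divide_left_mono) auto
    moreover have "0 \<le> a * Q / \<sigma>" using a Q s0 by simp
    ultimately show ?thesis by (intro power_mono) auto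
  qed
  have "sqrt (CG * m ^ 10 * (2 * K ^ 12)) * (a * Q / \<sigma>)\<^sup>2 \<le> (sqrt (2 * CG) * m ^ 5 * K0 ^ 6) * (a * Q / D)\<^sup>2"
    using q1 q2 CG m K0 by (intro mult_mono) auto
  also have "\<dots> = 36 * sqrt (2 * CG) * K0 ^ 6 * Q\<^sup>2 / lam\<^sup>2 / m"
    unfolding D_def using a lam m by (simp add: field_simps power_mult_distrib) (simp add: power_def)
  finally have b2: "S2 \<le> 36 * sqrt (2 * CG) * K0 ^ 6 * Q\<^sup>2 / lam\<^sup>2 / m" using S2 by linarith
  show ?thesis using b1 b2 m by (simp add: add_divide_distrib)
qed


definition Cst :: "nat set set set \<Rightarrow> real \<Rightarrow> real" where
  "Cst \<H> lam = (let Q = real (card (H3 \<H>)) / lam; K0 = sqrt (2 / lam);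
      CP = 5 * 2 ^ 32; CG = 6 * 2 ^ 100 in
     3 + (14 * (216 * Q ^ 3 * K0 ^ 3 * CP / lam ^ 3) + 2 * (36 * sqrt (2 * CG) * K0 ^ 6 * Q\<^sup>2 / lam\<^sup>2)))"

lemma I3_small: "n < 3 \<Longrightarrow> I3 n = {}"
proof (rule ccontr)
  assume n: "n < 3" and "I3 n \<noteq> {}"
  then obtain E where E: "E \<in> I3 n" by blast
  have "card (vtx E) \<le> card {0..<n}" by (rule card_mono) (auto simp: I3_vtx_range[OF E])
  then show False using I3_card_vtx[OF E] n by simp
qed

lemma Kc_le:
  assumes lam: "0 < lam" "lam < 1/2" and p: "lam < p" "p < 1 - lam"
  shows "Kc p \<le> sqrt (2 / lam)"
proof -
  have "lam / 2 \<le> lam * (1 - lam)" using lam by (simp add: field_simps)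
  also have "lam * (1 - lam) \<le> p * (1 - p)"
  proof -
    have "0 \<le> (p - lam) * (1 - lam - p)" using p by simp
    then show ?thesis by (simp add: algebra_simps)
  qed
  finally have pp: "lam / 2 \<le> p * (1 - p)" .
  have "sqrt (lam / 2) \<le> sqrt (p * (1 - p))" using pp by simp
  moreover have "0 < sqrt (lam / 2)" using lam by simp
  ultimately have "1 / sqrt (p * (1 - p)) \<le> 1 / sqrt (lam / 2)" by (intro divide_left_mono) auto
  also have "1 / sqrt (lam / 2) = sqrt (2 / lam)" by (simp add: real_sqrt_divide)
  finally show ?thesis unfolding Kc_def[of p] using lam p by (simp add: Kc_def)
qed

context gsetup
begin

lemma main_bound:
  fixes l :: nat and lam p :: real and \<Delta> :: "nat set set \<Rightarrow> real" and h :: "real \<Rightarrow> real"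
  assumes lam: "0 < lam" "lam < 1/2" and n: "1 \<le> n" and p: "lam < p" "p < 1 - lam"
    and Db: "\<forall>H\<in>\<H>. \<bar>\<Delta> H\<bar> \<le> 1 / lam" and H': "H' \<in> H3 \<H>" "lam \<le> \<bar>\<Delta> H'\<bar>"
    and lip: "1-lipschitz_on UNIV h"
  shows "\<bar>EG n p (\<lambda>x. h (Wk l \<H> \<Delta> n p 3 x / sqrt (measure_pmf.variance (Gnp n p) (Wk l \<H> \<Delta> n p 3))))
            - (\<integral>z. h z \<partial>std_normal)\<bar> \<le> Cst \<H> lam / sqrt (real n)"
proof -
  have p0: "0 < p" and p1: "p < 1" using lam p by auto
  define c where "c = cf l \<H> n \<Delta>"
  have Weq: "Wk l \<H> \<Delta> n p 3 = (\<lambda>x. \<Sum>E\<in>I3 n. c E * chiS p E x)"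
    unfolding c_def by (rule ext) (rule W3_eq)
  define \<sigma> where "\<sigma> = sqrt (\<Sum>E\<in>I3 n. (c E)\<^sup>2)"
  have var: "measure_pmf.variance (Gnp n p) (Wk l \<H> \<Delta> n p 3) = (\<Sum>E\<in>I3 n. (c E)\<^sup>2)"
    unfolding Weq by (rule varW[OF p0 p1])
  define Q where "Q = real (card (H3 \<H>)) / lam"
  define K0 where "K0 = sqrt (2 / lam)"
  define CP :: real where "CP = 5 * 2 ^ 32"
  define CG :: real where "CG = 6 * 2 ^ 100"
  define X where "X = 14 * (216 * Q ^ 3 * K0 ^ 3 * CP / lam ^ 3) + 2 * (36 * sqrt (2 * CG) * K0 ^ 6 * Q\<^sup>2 / lam\<^sup>2)"
  have Q0: "0 \<le> Q" unfolding Q_def using lam by simp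
  have K00: "0 \<le> K0" unfolding K0_def using lam by simp
  have X0: "0 \<le> X" unfolding X_def CP_def CG_def using Q0 K00 lam by simp
  have Cst: "Cst \<H> lam = 3 + X" unfolding Cst_def X_def Q_def K0_def CP_def CG_def Let_def by simp
  define S1 where "S1 = (\<Sum>E\<in>I3 n. EG n p (\<lambda>x. \<bar>c E / \<sigma> * chiS p E x\<bar> * (\<Sum>j\<in>NE n E. c j / \<sigma> * chiS p j x)\<^sup>2))"
  define S2 where "S2 = EG n p (\<lambda>x. \<bar>1 - (\<Sum>E\<in>I3 n. (c E / \<sigma> * chiS p E x) * (\<Sum>j\<in>NE n E. c j / \<sigma> * chiS p j x))\<bar>)"
  have st: "\<bar>EG n p (\<lambda>x. h ((\<Sum>E\<in>I3 n. c E * chiS p E x) / \<sigma>)) - (\<integral>z. h z \<partial>std_normal)\<bar> \<le> 14 * S1 + 2 * S2"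
    unfolding S1_def S2_def by (rule stein_I3[OF p0 p1 lip])
  have main: "14 * S1 + 2 * S2 \<le> (3 + X) / sqrt (real n)"
  proof (cases "n < 3")
    case True
    then have e: "I3 n = {}" by (rule I3_small)
    have "S1 = 0" "S2 = 1" unfolding S1_def S2_def e by simp_all
    moreover have "2 \<le> (3 + X) / sqrt (real n)"
    proof -
      have "sqrt (real n) \<le> sqrt 2" using True by simp
      also have "sqrt 2 \<le> 3 / 2" by (rule real_le_lsqrt) (auto simp: power2_eq_square)
      finally have "2 * sqrt (real n) \<le> 3 + X" using X0 by linarith
      moreover have "0 < sqrt (real n)" using n by simp
      ultimately show ?thesis by (simp add: le_divide_eq)
    qed
    ultimately show ?thesis by simp
  next
    case False
    then have n3: "3 \<le> n" by simp
    define m where "m = sqrt (real n)"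
    have m0: "0 < m" unfolding m_def using n by simp
    have mn: "m\<^sup>2 = real n" unfolding m_def by simp
    define a where "a = real n ^ (l - 3)"
    have a0: "0 < a" unfolding a_def using n by simp
    have cb: "\<bar>c E\<bar> \<le> a * Q" if "E \<in> I3 n" for E
      unfolding c_def a_def Q_def by (rule cf_bound[OF Db])
    have c00: "0 \<le> a * Q" using a0 Q0 by simp
    have lowc: "(real n / 3) ^ 3 * (a\<^sup>2 * lam\<^sup>2) \<le> (\<Sum>E\<in>I3 n. (c E)\<^sup>2)"
    proof -
      have "(real n / 3) ^ 3 \<le> real (n choose 3)" using binomial_ge_n_over_k_pow_k[of 3 n] n3 by simp
      also have "\<dots> \<le> real (card {E\<in>I3 n. graph_iso E H'})" using count_copies[OF H'(1), of n] by simp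
      finally have cc: "(real n / 3) ^ 3 \<le> real (card {E\<in>I3 n. graph_iso E H'})" .
      have "a\<^sup>2 * lam\<^sup>2 \<le> (a * \<Delta> H')\<^sup>2"
      proof -
        have "lam\<^sup>2 \<le> (\<Delta> H')\<^sup>2" using H'(2) lam by (metis abs_le_square_iff abs_of_pos)
        then show ?thesis using a0 by (simp add: power_mult_distrib mult_left_mono)
      qed
      then have "(real n / 3) ^ 3 * (a\<^sup>2 * lam\<^sup>2) \<le> real (card {E\<in>I3 n. graph_iso E H'}) * (a * \<Delta> H')\<^sup>2"
        using cc by (intro mult_mono) auto
      also have "\<dots> = (\<Sum>E\<in>{E\<in>I3 n. graph_iso E H'}. (c E)\<^sup>2)"
        unfolding c_def a_def by (simp add: cf_copy[OF H'(1)])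
      also have "\<dots> \<le> (\<Sum>E\<in>I3 n. (c E)\<^sup>2)"
        by (rule sum_mono2[OF finite_I3]) auto
      finally show ?thesis .
    qed
    have sig: "a * lam * m ^ 3 / 6 \<le> \<sigma>"
      unfolding \<sigma>_def
    proof (rule real_le_rsqrt)
      have "(a * lam * m ^ 3 / 6)\<^sup>2 = real n ^ 3 * (a\<^sup>2 * lam\<^sup>2) / 36"
        using mn by (simp add: power2_eq_square power3_eq_cube field_simps)
      also have "\<dots> \<le> (real n / 3) ^ 3 * (a\<^sup>2 * lam\<^sup>2)"
        by (simp add: power_divide field_simps)
      finally show "(a * lam * m ^ 3 / 6)\<^sup>2 \<le> (\<Sum>E\<in>I3 n. (c E)\<^sup>2)" using lowc by linarith
    qed
    have s0: "0 < \<sigma>" using sig a0 lam m0 by (smt (verit) divide_pos_pos mult_pos_pos zero_less_power)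
    have s2: "\<sigma>\<^sup>2 = (\<Sum>E\<in>I3 n. (c E)\<^sup>2)" unfolding \<sigma>_def by (simp add: sum_nonneg)
    have K: "0 \<le> Kc p" "Kc p \<le> K0" using Kc_ge1[OF p0 p1] Kc_le[OF lam p] unfolding K0_def by auto
    have b1: "S1 \<le> (a * Q) ^ 3 * Kc p ^ 3 / \<sigma> ^ 3 * (CP * m ^ 8)"
    proof -
      have "S1 \<le> (a * Q) ^ 3 * Kc p ^ 3 / \<sigma> ^ 3 * (5 * real n ^ 4 * 2 ^ 32)"
        unfolding S1_def by (rule S1_bound[OF p0 p1 n cb s0 c00])
      also have "5 * real n ^ 4 * 2 ^ 32 = CP * m ^ 8" unfolding CP_def mn[symmetric] by (simp add: power_mult[symmetric])
      finally show ?thesis .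
    qed
    have b2: "S2 \<le> sqrt (CG * m ^ 10 * (2 * Kc p ^ 12)) * (a * Q / \<sigma>)\<^sup>2"
    proof -
      have "S2 \<le> sqrt (6 * real n ^ 5 * 2 ^ 100 * (2 * Kc p ^ 12)) * (a * Q / \<sigma>)\<^sup>2"
        unfolding S2_def by (rule S2_bound[OF p0 p1 n cb c00 s0 s2])
      also have "6 * real n ^ 5 * 2 ^ 100 = CG * m ^ 10" unfolding CG_def mn[symmetric] by (simp add: power_mult[symmetric])
      finally show ?thesis .
    qed
    have "14 * S1 + 2 * S2 \<le> X / m"
      unfolding X_def by (rule final_arith[OF m0 a0 lam(1) Q0 K sig _ _ b1 b2]) (simp_all add: CP_def CG_def)
    also have "\<dots> \<le> (3 + X) / m" using m0 by (simp add: divide_right_mono)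
    finally show ?thesis unfolding m_def .
  qed
  have "\<bar>EG n p (\<lambda>x. h (Wk l \<H> \<Delta> n p 3 x / sqrt (measure_pmf.variance (Gnp n p) (Wk l \<H> \<Delta> n p 3))))
            - (\<integral>z. h z \<partial>std_normal)\<bar> = \<bar>EG n p (\<lambda>x. h ((\<Sum>E\<in>I3 n. c E * chiS p E x) / \<sigma>)) - (\<integral>z. h z \<partial>std_normal)\<bar>"
    unfolding var \<sigma>_def by (simp add: Weq)
  also have "\<dots> \<le> Cst \<H> lam / sqrt (real n)" using st main Cst by simp
  finally show ?thesis .
qed

end


theorem lemma3p3:
  fixes l :: nat and lam :: real and \<H> \<H>' :: "nat set set set"
  assumes "l \<ge> 3" and "0 < lam" and "lam < 1/2"
    and "\<forall>H\<in>\<H>. is_graph H \<and> nv H \<le> l"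
    and "\<forall>G\<in>\<H>. \<forall>H\<in>\<H>. G \<noteq> H \<longrightarrow> \<not> graph_iso G H"
    and "\<H>' \<subseteq> \<H>"
    and "\<forall>k. 3 \<le> k \<and> k \<le> l \<longrightarrow> (\<exists>H\<in>\<H>'. connected_graph H \<and> nv H = k)"
  shows "\<exists>C. \<forall>n p \<Delta>. n \<ge> 1 \<and> lam < p \<and> p < 1 - lam
            \<and> (\<forall>H\<in>\<H>. \<bar>\<Delta> H\<bar> \<le> 1 / lam) \<and> (\<forall>H\<in>\<H>'. \<bar>\<Delta> H\<bar> \<ge> lam) \<longrightarrow>
            (let W3 = Wk l \<H> \<Delta> n p 3;
                 \<sigma> = sqrt (measure_pmf.variance (Gnp n p) W3)
             in wass_std_normal (measure_pmf (Gnp n p)) (\<lambda>x. W3 x / \<sigma>)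
                  \<le> ereal (C / sqrt (real n)))"
proof -
  have gs: "gsetup \<H>" by unfold_locales (use assms(4,5) in auto)
  obtain H' where H': "H' \<in> \<H>'" "nv H' = 3" using assms(1,7) by fastforce
  have H'3: "H' \<in> H3 \<H>" using H' assms(6) unfolding H3_def by auto
  show ?thesis
  proof (rule exI[of _ "Cst \<H> lam"], intro allI impI)
    fix n :: nat and p :: real and \<Delta> :: "nat set set \<Rightarrow> real"
    assume A: "n \<ge> 1 \<and> lam < p \<and> p < 1 - lam \<and> (\<forall>H\<in>\<H>. \<bar>\<Delta> H\<bar> \<le> 1 / lam) \<and> (\<forall>H\<in>\<H>'. \<bar>\<Delta> H\<bar> \<ge> lam)"
    have DH': "lam \<le> \<bar>\<Delta> H'\<bar>" using A H'(1) by auto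
    have n1: "1 \<le> n" and pl: "lam < p" and pu: "p < 1 - lam" and Db: "\<forall>H\<in>\<H>. \<bar>\<Delta> H\<bar> \<le> 1 / lam"
      using A by auto
    show "let W3 = Wk l \<H> \<Delta> n p 3; \<sigma> = sqrt (measure_pmf.variance (Gnp n p) W3)
          in wass_std_normal (measure_pmf (Gnp n p)) (\<lambda>x. W3 x / \<sigma>) \<le> ereal (Cst \<H> lam / sqrt (real n))"
      unfolding Let_def wass_std_normal_def
    proof (rule SUP_least)
      fix h :: "real \<Rightarrow> real" assume "h \<in> {f. 1-lipschitz_on UNIV f}"
      then have lip: "1-lipschitz_on UNIV h" by simp
      have "\<bar>EG n p (\<lambda>x. h (Wk l \<H> \<Delta> n p 3 x / sqrt (measure_pmf.variance (Gnp n p) (Wk l \<H> \<Delta> n p 3))))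
            - (\<integral>z. h z \<partial>std_normal)\<bar> \<le> Cst \<H> lam / sqrt (real n)"
        by (rule gsetup.main_bound[OF gs assms(2,3) n1 pl pu Db H'3 DH' lip])
      then show "ereal \<bar>EG n p (\<lambda>x. h (Wk l \<H> \<Delta> n p 3 x / sqrt (measure_pmf.variance (Gnp n p) (Wk l \<H> \<Delta> n p 3))))
            - (\<integral>z. h z \<partial>std_normal)\<bar> \<le> ereal (Cst \<H> lam / sqrt (real n))" by simp
    qed
  qed
qed


end
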